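(* In the setting below, let $n\in\mathbb{N}$ and let $b\in\operatorname{Mat}_n(D_I)$ satisfy $|b-\mathbb{1}|_t<1$. Then for each $i\in I$ there exist $b_i'\in\operatorname{GL}_n(Q_i')$ and $b_i\in\operatorname{GL}_n(Q_i)$ such that $b=b_i'b_i$.
   Context: Let $K$ be a number field with ring of integers $R$; for $x\in K$ put $\|x\|=\max_{\sigma\in\operatorname{Hom}(K,\mathbb{C})}|\sigma(x)|$, and for a subring $S\subseteq K$ let $S\{t\}=\{\sum_{n\ge0}a_nt^n\in S[[t]]:\limsup_n\|a_n\|^{1/n}\le1\}$. Let $I$ be a finite index set containing the symbol $1$, and for each $i\in I$ let $a_i\in R$ be nonzero and not a unit, with $a_iR+a_jR=R$ for distinct $i,j\in I$. For $J\subseteq I$ let $a_J=\prod_{j\in J}a_j$ ($a_\emptyset=1$), $R_J=R[1/a_J]$, and $D_J=R_J\{t\}$ if $1\notin J$, $D_J=R_J[[t]]$ if $1\in J$; all are subrings of $D_I=R_I[[t]]$. For $i\in I$ put $D_i=D_{I\setminus\{i\}}$, $Q=\operatorname{Quot}(D_I)$, $Q_i=\operatorname{Quot}(D_i)\subseteq Q$ and $Q_i'=\bigcap_{j\in I,j\ne i}Q_j$. $|\cdot|_t=e^{-v_t}$ is the $t$-adic absolute value on $R_I[[t]]$, extended to matrices by the maximum over entries; $\mathbb{1}$ is the identity matrix. *)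

theory Defs
  imports Complex_Main
    "HOL-Computational_Algebra.Formal_Laurent_Series"
    "HOL-Computational_Algebra.Polynomial"
    "HOL-Library.Extended_Real"
    "Jordan_Normal_Form.Matrix"
begin

text \<open>Number fields are modelled as subfields of the complex numbers that are
  finite-dimensional over the rationals.\<close>

definition subfield_C :: "complex set \<Rightarrow> bool" where
  "subfield_C K \<longleftrightarrow> 0 \<in> K \<and> 1 \<in> K \<and>
     (\<forall>x\<in>K. \<forall>y\<in>K. x + y \<in> K \<and> x * y \<in> K \<and> - x \<in> K) \<and>
     (\<forall>x\<in>K. x \<noteq> 0 \<longrightarrow> inverse x \<in> K)"

definition number_field :: "complex set \<Rightarrow> bool" where
  "number_field K \<longleftrightarrow> subfield_C K \<and>
     (\<exists>B. finite B \<and> B \<subseteq> K \<and>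
        (\<forall>x\<in>K. \<exists>c. x = (\<Sum>b\<in>B. of_rat (c b) * b)))"

text \<open>Field embeddings \<open>K \<rightarrow> \<complex>\<close> (set to 0 outside K so that the set is finite).\<close>
definition embeddings :: "complex set \<Rightarrow> (complex \<Rightarrow> complex) set" where
  "embeddings K = {\<sigma>. (\<forall>x\<in>K. \<forall>y\<in>K. \<sigma> (x + y) = \<sigma> x + \<sigma> y \<and> \<sigma> (x * y) = \<sigma> x * \<sigma> y)
      \<and> \<sigma> 1 = 1 \<and> (\<forall>x. x \<notin> K \<longrightarrow> \<sigma> x = 0)}"

definition house :: "complex set \<Rightarrow> complex \<Rightarrow> real" where
  "house K x = Max ((\<lambda>\<sigma>. cmod (\<sigma> x)) ` embeddings K)"

definition algebraic_integer :: "complex \<Rightarrow> bool" where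
  "algebraic_integer x \<longleftrightarrow>
     (\<exists>p :: int poly. lead_coeff p = 1 \<and> poly (map_poly of_int p) x = 0)"

definition ring_of_integers :: "complex set \<Rightarrow> complex set" where
  "ring_of_integers K = {x \<in> K. algebraic_integer x}"

definition localize :: "complex set \<Rightarrow> complex \<Rightarrow> complex set" where
  "localize S a = {r / a ^ k | r k. r \<in> S}"

definition fps_over :: "complex set \<Rightarrow> complex fps set" where
  "fps_over S = {f. \<forall>n. fps_nth f n \<in> S}"

definition conv_fps_over :: "complex set \<Rightarrow> complex set \<Rightarrow> complex fps set" where
  "conv_fps_over K S = {f \<in> fps_over S.
      limsup (\<lambda>n. ereal (house K (fps_nth f n) powr (1 / real n))) \<le> 1}"

definition aJ :: "('i \<Rightarrow> complex) \<Rightarrow> 'i set \<Rightarrow> complex" where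
  "aJ a J = (\<Prod>j\<in>J. a j)"

definition RJ :: "complex set \<Rightarrow> ('i \<Rightarrow> complex) \<Rightarrow> 'i set \<Rightarrow> complex set" where
  "RJ K a J = localize (ring_of_integers K) (aJ a J)"

definition DJ :: "complex set \<Rightarrow> ('i \<Rightarrow> complex) \<Rightarrow> 'i \<Rightarrow> 'i set \<Rightarrow> complex fps set" where
  "DJ K a i1 J = (if i1 \<in> J then fps_over (RJ K a J) else conv_fps_over K (RJ K a J))"

text \<open>Fraction field of a subdomain of \<open>\<complex>[[t]]\<close>, realised inside \<open>\<complex>((t))\<close>.\<close>
definition Quot :: "complex fps set \<Rightarrow> complex fls set" where
  "Quot D = {fps_to_fls f / fps_to_fls g | f g. f \<in> D \<and> g \<in> D \<and> g \<noteq> 0}"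

definition Qi :: "complex set \<Rightarrow> ('i \<Rightarrow> complex) \<Rightarrow> 'i \<Rightarrow> 'i set \<Rightarrow> 'i \<Rightarrow> complex fls set" where
  "Qi K a i1 I i = Quot (DJ K a i1 (I - {i}))"

definition Qi' :: "complex set \<Rightarrow> ('i \<Rightarrow> complex) \<Rightarrow> 'i \<Rightarrow> 'i set \<Rightarrow> 'i \<Rightarrow> complex fls set" where
  "Qi' K a i1 I i = (\<Inter>j\<in>I - {i}. Qi K a i1 I j)"

definition t_abs :: "complex fps \<Rightarrow> real" where
  "t_abs f = (if f = 0 then 0 else exp (- real (subdegree f)))"

definition t_abs_mat :: "complex fps mat \<Rightarrow> real" where
  "t_abs_mat M = Max (insert 0 (t_abs ` elements_mat M))"

definition GL :: "nat \<Rightarrow> complex fls set \<Rightarrow> complex fls mat set" where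
  "GL n S = {A \<in> carrier_mat n n. elements_mat A \<subseteq> S \<and>
     (\<exists>B \<in> carrier_mat n n. elements_mat B \<subseteq> S \<and> A * B = 1\<^sub>m n \<and> B * A = 1\<^sub>m n)}"

end

theory Submission
  imports Defs "Jordan_Normal_Form.Char_Poly" "HOL-Real_Asymp.Real_Asymp"
begin


lemma algebraic_integer_iff: "algebraic_integer (x::complex) \<longleftrightarrow> algebraic_int x"
  unfolding algebraic_integer_def algebraic_int_altdef_ipoly by auto

definition zspan :: "complex set \<Rightarrow> complex set" where
  "zspan G = {(\<Sum>h\<in>G. of_int (c h) * h) | c. True}"

lemma key_alg_int:
  assumes G: "finite G" "g0 \<in> G" "g0 \<noteq> 0"
    and cl: "\<And>g. g \<in> G \<Longrightarrow> lam * g \<in> zspan G"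
  shows "algebraic_int lam"
proof -
  obtain f where f: "bij_betw f {0..<card G} G" using ex_bij_betw_nat_finite[OF G(1)] by blast
  define n where "n = card G"
  have "\<forall>g\<in>G. \<exists>c. lam * g = (\<Sum>h\<in>G. of_int (c h) * h)" using cl unfolding zspan_def by blast
  then obtain C where C: "\<And>g. g \<in> G \<Longrightarrow> lam * g = (\<Sum>h\<in>G. of_int (C g h) * h)" by metis
  define A :: "int mat" where "A = mat n n (\<lambda>(i,j). C (f i) (f j))"
  define v :: "complex vec" where "v = vec n f"
  have A: "A \<in> carrier_mat n n" unfolding A_def by simp
  have fi: "f i \<in> G" if "i < n" for i using f that unfolding n_def bij_betw_def by auto
  have Av: "map_mat of_int A *\<^sub>v v = lam \<cdot>\<^sub>v v"
  proof (rule eq_vecI)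
    fix i assume i: "i < dim_vec (lam \<cdot>\<^sub>v v)"
    hence i: "i < n" by (simp add: v_def)
    have "(map_mat of_int A *\<^sub>v v) $ i = (\<Sum>j<n. of_int (C (f i) (f j)) * f j)"
      using i by (simp add: A_def v_def scalar_prod_def atLeast0LessThan mult_mat_vec_def)
    also have "\<dots> = (\<Sum>h\<in>G. of_int (C (f i) h) * h)"
      using sum.reindex_bij_betw[OF f, of "\<lambda>h. of_int (C (f i) h) * h"]
      by (simp add: n_def atLeast0LessThan)
    also have "\<dots> = lam * f i" using C[OF fi[OF i]] by simp
    finally show "(map_mat of_int A *\<^sub>v v) $ i = (lam \<cdot>\<^sub>v v) $ i" using i by (simp add: v_def)
  qed (simp add: A_def v_def)
  obtain j where j: "j < n" "f j = g0" using f G(2) unfolding bij_betw_def n_def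
    by (metis atLeastLessThan_iff imageE)
  have v0: "v \<noteq> 0\<^sub>v n" using j G(3) unfolding v_def
    by (metis index_vec index_zero_vec(1))
  have ev: "eigenvalue (map_mat of_int A :: complex mat) lam"
    unfolding eigenvalue_def eigenvector_def using Av v0 A by (intro exI[of _ v], auto simp: v_def)
  have "poly (char_poly (map_mat of_int A :: complex mat)) lam = 0"
    using eigenvalue_root_char_poly[of "map_mat of_int A" n lam] A ev by auto
  moreover have "char_poly (map_mat of_int A :: complex mat) = map_poly of_int (char_poly A)"
    by (rule of_int_hom.char_poly_hom[OF A])
  ultimately have "poly (map_poly of_int (char_poly A)) lam = 0" by simp
  moreover have "lead_coeff (char_poly A) = 1" using degree_monic_char_poly[OF A] by simp
  ultimately show ?thesis unfolding algebraic_int_altdef_ipoly by blast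
qed

lemma zspanI: "z = (\<Sum>h\<in>G. of_int (c h) * h) \<Longrightarrow> z \<in> zspan G"
  unfolding zspan_def by blast

lemma zspan_add: "z1 \<in> zspan G \<Longrightarrow> z2 \<in> zspan G \<Longrightarrow> z1 + z2 \<in> zspan G"
proof -
  assume "z1 \<in> zspan G" "z2 \<in> zspan G"
  then obtain c1 c2 where "z1 = (\<Sum>h\<in>G. of_int (c1 h) * h)" "z2 = (\<Sum>h\<in>G. of_int (c2 h) * h)"
    unfolding zspan_def by blast
  hence "z1 + z2 = (\<Sum>h\<in>G. of_int ((\<lambda>h. c1 h + c2 h) h) * h)"
    by (simp add: sum.distrib distrib_right)
  thus ?thesis by (rule zspanI)
qed

lemma zspan_0: "0 \<in> zspan G"
  unfolding zspan_def by (rule CollectI, rule exI[of _ "\<lambda>_. 0"], simp)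

lemma zspan_intmult: "z \<in> zspan G \<Longrightarrow> of_int k * z \<in> zspan G"
proof -
  assume "z \<in> zspan G"
  then obtain c where "z = (\<Sum>h\<in>G. of_int (c h) * h)" unfolding zspan_def by blast
  hence "of_int k * z = (\<Sum>h\<in>G. of_int ((\<lambda>h. k * c h) h) * h)"
    by (simp add: sum_distrib_left mult.assoc)
  thus ?thesis by (rule zspanI)
qed

lemma zspan_elem: "finite G \<Longrightarrow> g \<in> G \<Longrightarrow> g \<in> zspan G"
proof -
  assume G: "finite G" "g \<in> G"
  have "(\<Sum>h\<in>G. of_int ((\<lambda>h. if h = g then 1 else 0) h) * h) = (\<Sum>h\<in>G. if h = g then g else 0)"
    by (rule sum.cong) auto
  also have "\<dots> = g" using G by simp
  finally show ?thesis by (intro zspanI) (rule sym)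
qed

lemma zspan_sum: "finite S \<Longrightarrow> (\<And>s. s \<in> S \<Longrightarrow> f s \<in> zspan G) \<Longrightarrow> sum f S \<in> zspan G"
  by (induction S rule: finite_induct) (auto intro: zspan_add zspan_0)

lemma zspan_mult:
  assumes G: "finite G" and cl: "\<And>g. g \<in> G \<Longrightarrow> x * g \<in> zspan G" and z: "z \<in> zspan G"
  shows "x * z \<in> zspan G"
proof -
  obtain c where "z = (\<Sum>h\<in>G. of_int (c h) * h)" using z unfolding zspan_def by blast
  hence "x * z = (\<Sum>h\<in>G. of_int (c h) * (x * h))"
    by (simp add: sum_distrib_left algebra_simps)
  also have "\<dots> \<in> zspan G" using G cl by (intro zspan_sum zspan_intmult) auto
  finally show ?thesis .
qed

lemma alg_rel:
  assumes "algebraic_int (x::complex)"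
  shows "\<exists>d c. d > 0 \<and> x ^ d = (\<Sum>j<d. of_int (c j) * x ^ j)"
proof -
  obtain p where p: "poly (map_poly of_int p) x = 0" "lead_coeff p = 1"
    using assms unfolding algebraic_int_altdef_ipoly by blast
  define d where "d = degree p"
  have d: "d > 0"
  proof (rule ccontr)
    assume "\<not> d > 0"
    hence dp: "degree p = 0" unfolding d_def by simp
    have c0: "coeff p 0 = 1" using p(2) dp by simp
    have "p = [:1:]" by (metis c0 degree_0_id[OF dp])
    thus False using p(1) by simp
  qed
  have "poly (map_poly of_int p) x = (\<Sum>j\<le>d. of_int (coeff p j) * x ^ j)"
    unfolding poly_altdef by (simp add: degree_map_poly coeff_map_poly d_def)
  also have "\<dots> = (\<Sum>j<d. of_int (coeff p j) * x ^ j) + of_int (coeff p d) * x ^ d"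
    by (simp add: lessThan_Suc_atMost[symmetric])
  finally have eq: "0 = (\<Sum>j<d. of_int (coeff p j) * x ^ j) + x ^ d" 
    using p unfolding d_def by simp
  have "x ^ d = - (\<Sum>j<d. of_int (coeff p j) * x ^ j)" using eq
    by (simp add: eq_neg_iff_add_eq_0 add.commute)
  also have "\<dots> = (\<Sum>j<d. of_int ((\<lambda>j. - coeff p j) j) * x ^ j)"
    by (simp add: sum_negf[symmetric])
  finally have "x ^ d = (\<Sum>j<d. of_int ((\<lambda>j. - coeff p j) j) * x ^ j)" .
  thus ?thesis using d by (intro exI[of _ d] exI[of _ "\<lambda>j. - coeff p j"]) simp
qed
lemma alg_int_mod:
  assumes x: "algebraic_int (x::complex)" and y: "algebraic_int y"
  obtains G where "finite G" "1 \<in> G" "\<And>g. g \<in> G \<Longrightarrow> x * g \<in> zspan G"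
    "\<And>g. g \<in> G \<Longrightarrow> y * g \<in> zspan G"
proof -
  obtain d c where dc: "d > 0" "x ^ d = (\<Sum>j<d. of_int (c j) * x ^ j)" using alg_rel[OF x] by blast
  obtain e c' where ec: "e > 0" "y ^ e = (\<Sum>j<e. of_int (c' j) * y ^ j)" using alg_rel[OF y] by blast
  define G where "G = (\<lambda>(k,l). x ^ k * y ^ l) ` ({..<d} \<times> {..<e})"
  have fin: "finite G" unfolding G_def by simp
  have one: "1 \<in> G" unfolding G_def using dc ec by (intro image_eqI[of _ _ "(0,0)"]) auto
  have mem: "x ^ k * y ^ l \<in> zspan G" if "k < d" "l < e" for k l
  proof (rule zspan_elem[OF fin])
    show "x ^ k * y ^ l \<in> G" unfolding G_def using that by (intro image_eqI[of _ _ "(k,l)"]) auto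
  qed
  have X: "x * g \<in> zspan G" if "g \<in> G" for g
  proof -
    obtain k l where kl: "k < d" "l < e" "g = x ^ k * y ^ l" using \<open>g \<in> G\<close> unfolding G_def by auto
    have xg: "x * g = x ^ Suc k * y ^ l" using kl(3) by (simp add: mult.assoc)
    show ?thesis
    proof (cases "Suc k < d")
      case True thus ?thesis using mem[OF True kl(2)] xg by (simp only: power_Suc[symmetric])
    next
      case False
      hence k: "Suc k = d" using kl by simp
      have "x * g = x ^ d * y ^ l" using xg k by simp
      also have "\<dots> = (\<Sum>j<d. of_int (c j) * (x ^ j * y ^ l))"
        unfolding dc(2) sum_distrib_right by (simp add: mult.assoc)
      also have "\<dots> \<in> zspan G" using mem kl by (intro zspan_sum zspan_intmult) auto
      finally show ?thesis .
    qed
  qed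
  have Y: "y * g \<in> zspan G" if "g \<in> G" for g
  proof -
    obtain k l where kl: "k < d" "l < e" "g = x ^ k * y ^ l" using \<open>g \<in> G\<close> unfolding G_def by auto
    have yg: "y * g = x ^ k * y ^ Suc l" using kl(3) by (simp add: mult.left_commute)
    show ?thesis
    proof (cases "Suc l < e")
      case True thus ?thesis using mem[OF kl(1) True] yg by (simp only:)
    next
      case False
      hence l: "Suc l = e" using kl by simp
      have "y * g = x ^ k * y ^ e" using yg l by simp
      also have "\<dots> = (\<Sum>j<e. of_int (c' j) * (x ^ k * y ^ j))"
        unfolding ec(2) sum_distrib_left by (simp add: mult.left_commute)
      also have "\<dots> \<in> zspan G" using mem kl by (intro zspan_sum zspan_intmult) auto
      finally show ?thesis .
    qed
  qed
  show ?thesis by (rule that[OF fin one X Y])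
qed

lemma alg_int_add: "algebraic_int (x::complex) \<Longrightarrow> algebraic_int y \<Longrightarrow> algebraic_int (x + y)"
proof -
  assume x: "algebraic_int x" and y: "algebraic_int y"
  obtain G where G: "finite G" "1 \<in> G" "\<And>g. g \<in> G \<Longrightarrow> x * g \<in> zspan G"
    "\<And>g. g \<in> G \<Longrightarrow> y * g \<in> zspan G" using alg_int_mod[OF x y] by blast
  show ?thesis
    by (rule key_alg_int[OF G(1,2)]) (auto simp: distrib_right intro: zspan_add G(3,4))
qed

lemma alg_int_mult: "algebraic_int (x::complex) \<Longrightarrow> algebraic_int y \<Longrightarrow> algebraic_int (x * y)"
proof -
  assume x: "algebraic_int x" and y: "algebraic_int y"
  obtain G where G: "finite G" "1 \<in> G" "\<And>g. g \<in> G \<Longrightarrow> x * g \<in> zspan G"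
    "\<And>g. g \<in> G \<Longrightarrow> y * g \<in> zspan G" using alg_int_mod[OF x y] by blast
  show ?thesis
    by (rule key_alg_int[OF G(1,2)]) (auto simp: mult.assoc intro: zspan_mult[OF G(1,3)] G(4))
qed



context
  fixes K :: "complex set"
  assumes sf: "subfield_C K"
begin

lemma K0: "0 \<in> K" and K1: "1 \<in> K" using sf unfolding subfield_C_def by auto
lemma Kadd: "x \<in> K \<Longrightarrow> y \<in> K \<Longrightarrow> x + y \<in> K" using sf unfolding subfield_C_def by auto
lemma Kmult: "x \<in> K \<Longrightarrow> y \<in> K \<Longrightarrow> x * y \<in> K" using sf unfolding subfield_C_def by auto
lemma Kuminus: "x \<in> K \<Longrightarrow> - x \<in> K" using sf unfolding subfield_C_def by auto
lemma Kdiff: "x \<in> K \<Longrightarrow> y \<in> K \<Longrightarrow> x - y \<in> K" using Kadd Kuminus by (metis diff_conv_add_uminus)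
lemma Kinverse: "x \<in> K \<Longrightarrow> inverse x \<in> K"
  using sf unfolding subfield_C_def by (cases "x = 0") auto
lemma Kdivide: "x \<in> K \<Longrightarrow> y \<in> K \<Longrightarrow> x / y \<in> K"
  using Kmult Kinverse by (simp add: divide_inverse)
lemma Kpower: "x \<in> K \<Longrightarrow> x ^ n \<in> K"
  by (induction n) (auto intro: K1 Kmult)
lemma Ksum: "(\<And>s. s \<in> S \<Longrightarrow> f s \<in> K) \<Longrightarrow> sum f S \<in> K"
  by (induction S rule: infinite_finite_induct) (auto intro: K0 Kadd)
lemma Kprod: "(\<And>s. s \<in> S \<Longrightarrow> f s \<in> K) \<Longrightarrow> prod f S \<in> K"
  by (induction S rule: infinite_finite_induct) (auto intro: K1 Kmult)
lemma Kof_nat: "of_nat n \<in> K"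
  by (induction n) (auto intro: K0 K1 Kadd)
lemma Kof_int: "of_int m \<in> K"
  by (cases m rule: int_cases) (auto intro: Kof_nat Kuminus simp del: of_nat_Suc)
lemma Kof_rat: "of_rat q \<in> K"
  by (cases q) (auto simp: of_rat_rat intro: Kdivide Kof_int)

context
  fixes \<sigma> assumes s: "\<sigma> \<in> embeddings K"
begin
lemma sadd: "x \<in> K \<Longrightarrow> y \<in> K \<Longrightarrow> \<sigma> (x + y) = \<sigma> x + \<sigma> y" using s unfolding embeddings_def by auto
lemma smult: "x \<in> K \<Longrightarrow> y \<in> K \<Longrightarrow> \<sigma> (x * y) = \<sigma> x * \<sigma> y" using s unfolding embeddings_def by auto
lemma s1: "\<sigma> 1 = 1" using s unfolding embeddings_def by auto
lemma sout: "x \<notin> K \<Longrightarrow> \<sigma> x = 0" using s unfolding embeddings_def by auto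
lemma s0: "\<sigma> 0 = 0"
  using sadd[OF K0 K0] by simp
lemma suminus: "x \<in> K \<Longrightarrow> \<sigma> (- x) = - \<sigma> x"
  using sadd[OF _ Kuminus, of x x] s0 by (simp add: eq_neg_iff_add_eq_0 add.commute)
lemma sdiff: "x \<in> K \<Longrightarrow> y \<in> K \<Longrightarrow> \<sigma> (x - y) = \<sigma> x - \<sigma> y"
  using sadd[OF _ Kuminus, of x y] suminus[of y] by simp
lemma ssum: "(\<And>s. s \<in> S \<Longrightarrow> f s \<in> K) \<Longrightarrow> \<sigma> (sum f S) = (\<Sum>s\<in>S. \<sigma> (f s))"
  by (induction S rule: infinite_finite_induct) (auto simp: s0 sadd Ksum)
lemma spower: "x \<in> K \<Longrightarrow> \<sigma> (x ^ n) = \<sigma> x ^ n"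
  by (induction n) (auto simp: s1 smult Kpower)
lemma sof_nat: "\<sigma> (of_nat n) = of_nat n"
  by (induction n) (auto simp: s0 s1 sadd Kof_nat K1)
lemma sof_int: "\<sigma> (of_int m) = of_int m"
  by (cases m rule: int_cases) (auto simp: sof_nat suminus Kof_nat simp del: of_nat_Suc)
lemma sof_rat: "\<sigma> (of_rat q) = of_rat q"
proof (cases q)
  case (Fract a b)
  have "of_rat q * of_int b = (of_int a :: complex)" using Fract by (simp add: of_rat_rat)
  hence "\<sigma> (of_rat q) * of_int b = of_int a"
    using smult[OF Kof_rat Kof_int, of q b] sof_int by metis
  thus ?thesis using Fract by (simp add: of_rat_rat field_simps)
qed
end

end


lemma rat_common_denom:
  assumes "finite (S :: rat set)"
  shows "\<exists>m::int. m > 0 \<and> (\<forall>q\<in>S. of_int m * q \<in> \<int>)"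
  using assms
proof (induction S rule: finite_induct)
  case empty thus ?case by (intro exI[of _ 1]) simp
next
  case (insert q S)
  then obtain m where m: "m > 0" "\<forall>q\<in>S. of_int m * q \<in> \<int>" by blast
  obtain a b where ab: "quotient_of q = (a, b)" by (cases "quotient_of q")
  have b: "b > 0" using quotient_of_denom_pos[OF ab] .
  have qab: "q = of_int a / of_int b" using quotient_of_div[OF ab] .
  have "of_int (m * b) * q' \<in> \<int>" if "q' \<in> insert q S" for q'
  proof (cases "q' = q")
    case True
    have "of_int (m * b) * q' = of_int (m * a)" using True qab b by (simp add: field_simps)
    thus ?thesis by (metis Ints_of_int)
  next
    case False
    hence "of_int m * q' \<in> \<int>" using that m by auto
    hence "of_int b * (of_int m * q') \<in> \<int>" by simp
    thus ?thesis by (simp add: mult.assoc mult.left_commute)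
  qed
  thus ?case using m b by (intro exI[of _ "m * b"]) simp
qed

context
  fixes K :: "complex set"
  assumes nf: "number_field K"
begin

lemma sfK: "subfield_C K" using nf unfolding number_field_def by auto

lemma nf_span: obtains B where "finite B" "B \<subseteq> K" "\<And>x. x \<in> K \<Longrightarrow> \<exists>c. x = (\<Sum>b\<in>B. of_rat (c b) * b)"
  using nf unfolding number_field_def by blast

lemma nf_integral:
  assumes x: "x \<in> K"
  shows "\<exists>D::int. D > 0 \<and> algebraic_int (of_int D * x)"
proof -
  obtain B where B: "finite B" "B \<subseteq> K" "\<And>x. x \<in> K \<Longrightarrow> \<exists>c. x = (\<Sum>b\<in>B. of_rat (c b) * b)"
    using nf_span by blast
  have "\<forall>\<beta>\<in>B. \<exists>c. x * \<beta> = (\<Sum>b\<in>B. of_rat (c b) * b)"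
    using B(2,3) x Kmult[OF sfK] by blast
  then obtain C where C: "\<And>\<beta>. \<beta> \<in> B \<Longrightarrow> x * \<beta> = (\<Sum>b\<in>B. of_rat (C \<beta> b) * b)" by metis
  obtain m :: int where m: "m > 0" "\<And>q. q \<in> (\<lambda>(\<beta>,b). C \<beta> b) ` (B \<times> B) \<Longrightarrow> of_int m * q \<in> \<int>"
    using rat_common_denom[of "(\<lambda>(\<beta>,b). C \<beta> b) ` (B \<times> B)"] B(1) by blast
  have mi: "of_int m * C \<beta> b = of_int \<lfloor>of_int m * C \<beta> b\<rfloor>" if "\<beta> \<in> B" "b \<in> B" for \<beta> b
  proof -
    have "C \<beta> b \<in> (\<lambda>(\<beta>,b). C \<beta> b) ` (B \<times> B)" using that by force
    hence "of_int m * C \<beta> b \<in> \<int>" by (rule m(2))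
    thus ?thesis by (metis Ints_cases floor_of_int)
  qed
  obtain g0 where g0: "g0 \<in> B" "g0 \<noteq> 0"
  proof (rule ccontr)
    assume "\<not> thesis"
    hence z: "\<And>g. g \<in> B \<Longrightarrow> g = 0" using that by blast
    obtain c where "1 = (\<Sum>b\<in>B. of_rat (c b) * b)" using B(3)[OF K1[OF sfK]] by blast
    also have "\<dots> = 0" using z by (intro sum.neutral) auto
    finally show False by simp
  qed
  have "algebraic_int (of_int m * x)"
  proof (rule key_alg_int[OF B(1) g0])
    fix \<beta> assume b: "\<beta> \<in> B"
    have "of_int m * x * \<beta> = (\<Sum>b\<in>B. of_rat (of_int m * C \<beta> b) * b)"
      by (simp add: mult.assoc C[OF b] sum_distrib_left of_rat_mult)
    also have "\<dots> = (\<Sum>b\<in>B. of_int \<lfloor>of_int m * C \<beta> b\<rfloor> * b)"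
      by (intro sum.cong refl) (metis b mi of_rat_of_int_eq)
    finally show "of_int m * x * \<beta> \<in> zspan B" by (rule zspanI)
  qed
  thus ?thesis using m(1) by blast
qed


lemma spoly:
  assumes s: "\<sigma> \<in> embeddings K" and z: "z \<in> K"
  shows "\<sigma> (poly (map_poly of_int p) z) = poly (map_poly of_int p) (\<sigma> z)"
proof -
  have t: "of_int (coeff p i) * z ^ i \<in> K" for i
    by (intro Kmult[OF sfK] Kof_int[OF sfK] Kpower[OF sfK] z)
  have "\<sigma> (poly (map_poly of_int p) z) = \<sigma> (\<Sum>i\<le>degree p. of_int (coeff p i) * z ^ i)"
    unfolding poly_altdef by (simp add: degree_map_poly coeff_map_poly)
  also have "\<dots> = (\<Sum>i\<le>degree p. of_int (coeff p i) * \<sigma> z ^ i)"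
    using t by (simp add: ssum[OF sfK s] smult[OF sfK s] sof_int[OF sfK s] spower[OF sfK s] z
        Kof_int[OF sfK] Kpower[OF sfK])
  also have "\<dots> = poly (map_poly of_int p) (\<sigma> z)"
    unfolding poly_altdef by (simp add: degree_map_poly coeff_map_poly)
  finally show ?thesis .
qed

lemma sspan:
  assumes s: "\<sigma> \<in> embeddings K" and B: "B \<subseteq> K"
  shows "\<sigma> (\<Sum>b\<in>B. of_rat (c b) * b) = (\<Sum>b\<in>B. of_rat (c b) * \<sigma> b)"
  using B by (simp add: ssum[OF sfK s] smult[OF sfK s] sof_rat[OF sfK s] subset_iff
      Kmult[OF sfK] Kof_rat[OF sfK])

lemma emb_finite: "finite (embeddings K)"
proof -
  obtain B where B: "finite B" "B \<subseteq> K" "\<And>x. x \<in> K \<Longrightarrow> \<exists>c. x = (\<Sum>b\<in>B. of_rat (c b) * b)"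
    using nf_span by blast
  have "\<forall>\<beta>\<in>B. \<exists>D p. D > (0::int) \<and> poly (map_poly of_int p) (of_int D * \<beta>) = 0 \<and> lead_coeff p = 1"
    using nf_integral B(2) unfolding algebraic_int_altdef_ipoly by blast
  then obtain D P where DP: "\<And>\<beta>. \<beta> \<in> B \<Longrightarrow> D \<beta> > (0::int) \<and>
     poly (map_poly of_int (P \<beta>)) (of_int (D \<beta>) * \<beta>) = 0 \<and> lead_coeff (P \<beta>) = 1" by metis
  define Z where "Z \<beta> = {z. poly (map_poly of_int (P \<beta>)) (of_int (D \<beta>) * z) = (0::complex)}" for \<beta>
  have Zfin: "finite (Z \<beta>)" if "\<beta> \<in> B" for \<beta>
  proof -
    have "P \<beta> \<noteq> 0" using DP[OF that] by auto
    hence "map_poly (of_int :: int \<Rightarrow> complex) (P \<beta>) \<noteq> 0" by (simp add: map_poly_eq_0_iff)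
    hence fin: "finite {w. poly (map_poly (of_int :: int \<Rightarrow> complex) (P \<beta>)) w = 0}"
      by (rule poly_roots_finite)
    have "Z \<beta> \<subseteq> (\<lambda>w. w / of_int (D \<beta>)) ` {w. poly (map_poly of_int (P \<beta>)) w = 0}"
    proof
      fix z assume "z \<in> Z \<beta>"
      moreover have "z = (of_int (D \<beta>) * z) / of_int (D \<beta>)" using DP[OF that] by simp
      ultimately show "z \<in> (\<lambda>w. w / of_int (D \<beta>)) ` {w. poly (map_poly of_int (P \<beta>)) w = 0}"
        unfolding Z_def by blast
    qed
    thus ?thesis using fin by (rule finite_subset[OF _ finite_imageI])
  qed
  have map: "restrict \<sigma> B \<in> (\<Pi>\<^sub>E \<beta>\<in>B. Z \<beta>)" if s: "\<sigma> \<in> embeddings K" for \<sigma>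
  proof -
    have "\<sigma> \<beta> \<in> Z \<beta>" if b: "\<beta> \<in> B" for \<beta>
    proof -
      have bK: "\<beta> \<in> K" using b B(2) by auto
      have DK: "of_int (D \<beta>) * \<beta> \<in> K" by (intro Kmult[OF sfK] Kof_int[OF sfK] bK)
      have "0 = \<sigma> (poly (map_poly of_int (P \<beta>)) (of_int (D \<beta>) * \<beta>))"
        using DP[OF b] s0[OF sfK s] by simp
      also have "\<dots> = poly (map_poly of_int (P \<beta>)) (of_int (D \<beta>) * \<sigma> \<beta>)"
        by (simp add: spoly[OF s DK] smult[OF sfK s Kof_int[OF sfK] bK] sof_int[OF sfK s])
      finally show ?thesis unfolding Z_def by simp
    qed
    thus ?thesis by auto
  qed
  have inj: "inj_on (\<lambda>\<sigma>. restrict \<sigma> B) (embeddings K)"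
  proof (rule inj_onI)
    fix \<sigma> \<tau> assume s: "\<sigma> \<in> embeddings K" and t: "\<tau> \<in> embeddings K"
      and eq: "restrict \<sigma> B = restrict \<tau> B"
    have eqB: "\<sigma> b = \<tau> b" if "b \<in> B" for b using eq that by (metis restrict_apply')
    show "\<sigma> = \<tau>"
    proof
      fix x show "\<sigma> x = \<tau> x"
      proof (cases "x \<in> K")
        case True
        then obtain c where c: "x = (\<Sum>b\<in>B. of_rat (c b) * b)" using B(3) by blast
        show ?thesis unfolding c sspan[OF s B(2)] sspan[OF t B(2)] using eqB by simp
      next
        case False thus ?thesis using sout[OF sfK s] sout[OF sfK t] by simp
      qed
    qed
  qed
  show ?thesis
  proof (rule inj_on_finite[OF inj _ finite_PiE[of B Z]])
    show "(\<lambda>\<sigma>. restrict \<sigma> B) ` embeddings K \<subseteq> (\<Pi>\<^sub>E \<beta>\<in>B. Z \<beta>)"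
      using map by blast
  qed (use B(1) Zfin in auto)
qed

definition idK :: "complex \<Rightarrow> complex" where "idK z = (if z \<in> K then z else 0)"

lemma idK_emb: "idK \<in> embeddings K"
  unfolding embeddings_def idK_def using K1[OF sfK] Kadd[OF sfK] Kmult[OF sfK] by auto

lemma house_ge: "\<sigma> \<in> embeddings K \<Longrightarrow> cmod (\<sigma> x) \<le> house K x"
  unfolding house_def using emb_finite by (intro Max_ge) auto

lemma house_le: "(\<And>\<sigma>. \<sigma> \<in> embeddings K \<Longrightarrow> cmod (\<sigma> x) \<le> c) \<Longrightarrow> house K x \<le> c"
  unfolding house_def using emb_finite idK_emb by (subst Max_le_iff) auto

lemma house_nonneg: "0 \<le> house K x"
  using house_ge[OF idK_emb, of x] norm_ge_zero order_trans by blast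

lemma house_0: "house K 0 = 0"
  using house_nonneg[of 0] house_le[of 0 0] s0[OF sfK] by fastforce

lemma house_add: "x \<in> K \<Longrightarrow> y \<in> K \<Longrightarrow> house K (x + y) \<le> house K x + house K y"
proof (rule house_le)
  fix \<sigma> assume s: "\<sigma> \<in> embeddings K" and "x \<in> K" "y \<in> K"
  hence "cmod (\<sigma> (x + y)) = cmod (\<sigma> x + \<sigma> y)" by (simp add: sadd[OF sfK s])
  also have "\<dots> \<le> cmod (\<sigma> x) + cmod (\<sigma> y)" by (rule norm_triangle_ineq)
  also have "\<dots> \<le> house K x + house K y" using house_ge[OF s] by (intro add_mono)
  finally show "cmod (\<sigma> (x + y)) \<le> house K x + house K y" .
qed

lemma house_mult: "x \<in> K \<Longrightarrow> y \<in> K \<Longrightarrow> house K (x * y) \<le> house K x * house K y"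
proof (rule house_le)
  fix \<sigma> assume s: "\<sigma> \<in> embeddings K" and "x \<in> K" "y \<in> K"
  hence "cmod (\<sigma> (x * y)) = cmod (\<sigma> x) * cmod (\<sigma> y)" by (simp add: smult[OF sfK s] norm_mult)
  also have "\<dots> \<le> house K x * house K y" using house_ge[OF s]
    by (intro mult_mono) (auto intro: house_nonneg)
  finally show "cmod (\<sigma> (x * y)) \<le> house K x * house K y" .
qed

lemma house_uminus: "x \<in> K \<Longrightarrow> house K (- x) \<le> house K x"
proof (rule house_le)
  fix \<sigma> assume s: "\<sigma> \<in> embeddings K" and "x \<in> K"
  thus "cmod (\<sigma> (- x)) \<le> house K x" using house_ge[OF s, of x] by (simp add: suminus[OF sfK s])
qed

lemma house_sum: "(\<And>s. s \<in> S \<Longrightarrow> f s \<in> K) \<Longrightarrow> house K (sum f S) \<le> (\<Sum>s\<in>S. house K (f s))"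
proof (induction S rule: infinite_finite_induct)
  case (insert x F)
  have "house K (sum f (insert x F)) = house K (f x + sum f F)" using insert by simp
  also have "\<dots> \<le> house K (f x) + house K (sum f F)"
    using insert by (intro house_add Ksum[OF sfK]) auto
  also have "\<dots> \<le> house K (f x) + (\<Sum>s\<in>F. house K (f s))" using insert by auto
  finally show ?case using insert by simp
qed (auto simp: house_0)

lemma of_rat_complex: "(of_rat q :: complex) = of_real (of_rat q)"
  by (cases q) (simp add: of_rat_rat)

lemma house_ratmult: "x \<in> K \<Longrightarrow> \<bar>q\<bar> \<le> 1 \<Longrightarrow> house K (of_rat q * x) \<le> house K x"
proof (rule house_le)
  fix \<sigma> assume s: "\<sigma> \<in> embeddings K" and x: "x \<in> K" and q: "\<bar>q\<bar> \<le> 1"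
  have "cmod (\<sigma> (of_rat q * x)) = cmod (of_rat q :: complex) * cmod (\<sigma> x)"
    using x by (simp add: smult[OF sfK s] sof_rat[OF sfK s] Kof_rat[OF sfK] norm_mult)
  also have "cmod (of_rat q :: complex) = \<bar>real_of_rat q\<bar>"
    by (subst of_rat_complex) (simp only: norm_of_real)
  also have "\<dots> \<le> 1" using q by (metis abs_of_rat of_rat_1 of_rat_less_eq)
  hence "\<bar>real_of_rat q\<bar> * cmod (\<sigma> x) \<le> 1 * house K x"
    using house_ge[OF s, of x] by (intro mult_mono) auto
  finally show "cmod (\<sigma> (of_rat q * x)) \<le> house K x" by simp
qed


abbreviation "RK \<equiv> ring_of_integers K"

lemma RK_iff: "x \<in> RK \<longleftrightarrow> x \<in> K \<and> algebraic_int x"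
  unfolding ring_of_integers_def algebraic_integer_iff by simp

lemma RK_K: "x \<in> RK \<Longrightarrow> x \<in> K" using RK_iff by simp
lemma RK0: "0 \<in> RK" using RK_iff K0[OF sfK] by simp
lemma RK1: "1 \<in> RK" using RK_iff K1[OF sfK] by simp
lemma RKadd: "x \<in> RK \<Longrightarrow> y \<in> RK \<Longrightarrow> x + y \<in> RK"
  using RK_iff Kadd[OF sfK] alg_int_add by simp
lemma RKmult: "x \<in> RK \<Longrightarrow> y \<in> RK \<Longrightarrow> x * y \<in> RK"
  using RK_iff Kmult[OF sfK] alg_int_mult by simp
lemma RKuminus: "x \<in> RK \<Longrightarrow> - x \<in> RK"
  using RK_iff Kuminus[OF sfK] algebraic_int_minus by simp
lemma RKdiff: "x \<in> RK \<Longrightarrow> y \<in> RK \<Longrightarrow> x - y \<in> RK"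
  using RKadd RKuminus by (metis diff_conv_add_uminus)
lemma RKof_int: "of_int m \<in> RK"
  using RK_iff Kof_int[OF sfK] by simp
lemma RKsum: "(\<And>s. s \<in> S \<Longrightarrow> f s \<in> RK) \<Longrightarrow> sum f S \<in> RK"
  by (induction S rule: infinite_finite_induct) (auto intro: RK0 RKadd)
lemma RKprod: "(\<And>s. s \<in> S \<Longrightarrow> f s \<in> RK) \<Longrightarrow> prod f S \<in> RK"
  by (induction S rule: infinite_finite_induct) (auto intro: RK1 RKmult)
lemma RKpower: "x \<in> RK \<Longrightarrow> x ^ n \<in> RK"
  by (induction n) (auto intro: RK1 RKmult)

lemma reduction: "\<exists>C\<ge>0. \<forall>x\<in>K. \<exists>\<rho>\<in>RK. house K (x - \<rho>) \<le> C"
proof -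
  obtain B where B: "finite B" "B \<subseteq> K" "\<And>x. x \<in> K \<Longrightarrow> \<exists>c. x = (\<Sum>b\<in>B. of_rat (c b) * b)"
    using nf_span by blast
  have "\<forall>\<beta>\<in>B. \<exists>D::int. D > 0 \<and> algebraic_int (of_int D * \<beta>)"
    using nf_integral B(2) by blast
  then obtain D where D: "\<And>\<beta>. \<beta> \<in> B \<Longrightarrow> D \<beta> > (0::int) \<and> algebraic_int (of_int (D \<beta>) * \<beta>)"
    by metis
  define w where "w \<beta> = of_int (D \<beta>) * \<beta>" for \<beta>
  have wR: "w \<beta> \<in> RK" if "\<beta> \<in> B" for \<beta>
    using D[OF that] that B(2) unfolding w_def RK_iff by (auto intro: Kmult[OF sfK] Kof_int[OF sfK])
  define C where "C = (\<Sum>\<beta>\<in>B. house K (w \<beta>))"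
  have C0: "C \<ge> 0" unfolding C_def by (intro sum_nonneg house_nonneg)
  have "\<exists>\<rho>\<in>RK. house K (x - \<rho>) \<le> C" if x: "x \<in> K" for x
  proof -
    obtain c where c: "x = (\<Sum>b\<in>B. of_rat (c b) * b)" using B(3)[OF x] by blast
    define q where "q \<beta> = c \<beta> / of_int (D \<beta>)" for \<beta>
    define \<rho> where "\<rho> = (\<Sum>\<beta>\<in>B. of_int \<lfloor>q \<beta>\<rfloor> * w \<beta>)"
    have \<rho>R: "\<rho> \<in> RK" unfolding \<rho>_def using wR by (intro RKsum RKmult RKof_int) auto
    have "x = (\<Sum>\<beta>\<in>B. of_rat (q \<beta>) * w \<beta>)" unfolding c
    proof (intro sum.cong refl)
      fix \<beta> assume b: "\<beta> \<in> B"
      have "D \<beta> \<noteq> 0" using D[OF b] by simp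
      thus "of_rat (c \<beta>) * \<beta> = of_rat (q \<beta>) * w \<beta>"
        unfolding q_def w_def by (simp add: of_rat_divide)
    qed
    hence "x - \<rho> = (\<Sum>\<beta>\<in>B. of_rat (q \<beta> - of_int \<lfloor>q \<beta>\<rfloor>) * w \<beta>)"
      unfolding \<rho>_def by (simp add: sum_subtractf[symmetric] of_rat_diff left_diff_distrib)
    also have "house K \<dots> \<le> (\<Sum>\<beta>\<in>B. house K (of_rat (q \<beta> - of_int \<lfloor>q \<beta>\<rfloor>) * w \<beta>))"
      using wR by (intro house_sum Kmult[OF sfK] Kof_rat[OF sfK] RK_K) auto
    also have "\<dots> \<le> C" unfolding C_def
    proof (intro sum_mono house_ratmult)
      fix \<beta> assume "\<beta> \<in> B"
      thus "w \<beta> \<in> K" using wR RK_K by auto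
      show "\<bar>q \<beta> - of_int \<lfloor>q \<beta>\<rfloor>\<bar> \<le> 1"
        using floor_correct[of "q \<beta>"] by linarith
    qed
    finally show ?thesis using \<rho>R by blast
  qed
  thus ?thesis using C0 by blast
qed

end



definition copr :: "complex set \<Rightarrow> complex \<Rightarrow> complex \<Rightarrow> bool" where
  "copr R x y \<longleftrightarrow> (\<exists>u\<in>R. \<exists>v\<in>R. u * x + v * y = 1)"

context
  fixes K :: "complex set" and I :: "'i set" and a :: "'i \<Rightarrow> complex"
  assumes nf: "number_field K" and I: "finite I"
    and a_int: "\<And>i. i \<in> I \<Longrightarrow> a i \<in> ring_of_integers K"
    and a_nz: "\<And>i. i \<in> I \<Longrightarrow> a i \<noteq> 0"
    and a_coprime: "\<And>i j. i \<in> I \<Longrightarrow> j \<in> I \<Longrightarrow> i \<noteq> j \<Longrightarrow>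
        (\<exists>x \<in> ring_of_integers K. \<exists>y \<in> ring_of_integers K. x * a i + y * a j = 1)"
begin

abbreviation "R \<equiv> ring_of_integers K"

lemma aJ_R: "J \<subseteq> I \<Longrightarrow> aJ a J \<in> R"
  unfolding aJ_def using a_int by (intro RKprod[OF nf]) auto

lemma aJ_nz: "J \<subseteq> I \<Longrightarrow> aJ a J \<noteq> 0"
  unfolding aJ_def using a_nz I by (subst prod_zero_iff) (auto intro: finite_subset)

lemma aJ_union: "A \<subseteq> I \<Longrightarrow> B \<subseteq> I \<Longrightarrow> A \<inter> B = {} \<Longrightarrow> aJ a (A \<union> B) = aJ a A * aJ a B"
  unfolding aJ_def using I by (intro prod.union_disjoint) (auto intro: finite_subset)

lemma RJ_iff: "x \<in> RJ K a J \<longleftrightarrow> (\<exists>r k. r \<in> R \<and> x = r / aJ a J ^ k)"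
  unfolding RJ_def localize_def by blast

lemma RJ_I: "r \<in> R \<Longrightarrow> r / aJ a J ^ k \<in> RJ K a J"
  unfolding RJ_iff by blast

lemma RJ_R: "r \<in> R \<Longrightarrow> r \<in> RJ K a J"
  using RJ_I[where k=0 and J=J] by simp

lemma RJ_K: "J \<subseteq> I \<Longrightarrow> x \<in> RJ K a J \<Longrightarrow> x \<in> K"
  unfolding RJ_iff using aJ_R RK_K[OF nf] Kdivide[OF sfK[OF nf]] Kpower[OF sfK[OF nf]] by metis

lemma RJ_add: assumes J: "J \<subseteq> I" and x: "x \<in> RJ K a J" and y: "y \<in> RJ K a J"
  shows "x + y \<in> RJ K a J"
proof -
  obtain r k s m where rs: "r \<in> R" "s \<in> R" "x = r / aJ a J ^ k" "y = s / aJ a J ^ m"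
    using x y unfolding RJ_iff by blast
  have nz: "aJ a J \<noteq> 0" using aJ_nz[OF J] .
  have "x + y = (r * aJ a J ^ m + s * aJ a J ^ k) / aJ a J ^ (k + m)"
    using nz unfolding rs(3,4) by (simp add: field_simps power_add)
  moreover have "r * aJ a J ^ m + s * aJ a J ^ k \<in> R"
    using rs aJ_R[OF J] by (intro RKadd[OF nf] RKmult[OF nf] RKpower[OF nf])
  ultimately show ?thesis using RJ_I by simp
qed

lemma RJ_mult: assumes J: "J \<subseteq> I" and x: "x \<in> RJ K a J" and y: "y \<in> RJ K a J"
  shows "x * y \<in> RJ K a J"
proof -
  obtain r k s m where rs: "r \<in> R" "s \<in> R" "x = r / aJ a J ^ k" "y = s / aJ a J ^ m"
    using x y unfolding RJ_iff by blast
  have "x * y = (r * s) / aJ a J ^ (k + m)"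
    using rs by (simp add: power_add)
  moreover have "r * s \<in> R" using rs by (intro RKmult[OF nf])
  ultimately show ?thesis using RJ_I by simp
qed

lemma RJ_uminus: assumes x: "x \<in> RJ K a J" shows "- x \<in> RJ K a J"
proof -
  obtain r k where r: "r \<in> R" "x = r / aJ a J ^ k" using x unfolding RJ_iff by blast
  have "- x = (- r) / aJ a J ^ k" using r by simp
  thus ?thesis using RJ_I[OF RKuminus[OF nf r(1)], of J k] by simp
qed

lemma RJ_0: "0 \<in> RJ K a J" using RJ_R RK0[OF nf] by blast
lemma RJ_1: "1 \<in> RJ K a J" using RJ_R RK1[OF nf] by blast

lemma RJ_diff: "J \<subseteq> I \<Longrightarrow> x \<in> RJ K a J \<Longrightarrow> y \<in> RJ K a J \<Longrightarrow> x - y \<in> RJ K a J"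
  using RJ_add RJ_uminus by (metis diff_conv_add_uminus)

lemma RJ_sum: "J \<subseteq> I \<Longrightarrow> (\<And>s. s \<in> S \<Longrightarrow> f s \<in> RJ K a J) \<Longrightarrow> sum f S \<in> RJ K a J"
  by (induction S rule: infinite_finite_induct) (auto intro: RJ_0 RJ_add)

lemma RJ_mono: assumes AJ: "A \<subseteq> J" and J: "J \<subseteq> I" shows "RJ K a A \<subseteq> RJ K a J"
proof
  fix x assume "x \<in> RJ K a A"
  then obtain r k where r: "r \<in> R" "x = r / aJ a A ^ k" unfolding RJ_iff by blast
  have eq: "aJ a J = aJ a A * aJ a (J - A)"
    using aJ_union[of A "J - A"] AJ J by (metis Diff_disjoint Diff_partition Diff_subset order_trans)
  have nz: "aJ a (J - A) \<noteq> 0" using aJ_nz[of "J - A"] J by auto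
  have "x = (r * aJ a (J - A) ^ k) / aJ a J ^ k"
    using r nz by (simp add: eq power_mult_distrib)
  moreover have "r * aJ a (J - A) ^ k \<in> R"
    using r aJ_R[of "J - A"] J by (intro RKmult[OF nf] RKpower[OF nf]) auto
  ultimately show "x \<in> RJ K a J" using RJ_I by simp
qed

lemma copr_sym: "copr R x y \<Longrightarrow> copr R y x"
  unfolding copr_def by (metis add.commute)

lemma copr_mult: assumes "copr R x y" "copr R x z" and "x \<in> R" "y \<in> R" "z \<in> R"
  shows "copr R x (y * z)"
proof -
  obtain u v u' v' where uv: "u \<in> R" "v \<in> R" "u' \<in> R" "v' \<in> R"
    "u * x + v * y = 1" "u' * x + v' * z = 1"
    using assms(1,2) unfolding copr_def by blast
  have "(u * x + v * y) * (u' * x + v' * z) = 1" using uv by simp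
  hence "(u * u' * x + u * v' * z + v * y * u') * x + (v * v') * (y * z) = 1"
    by (simp add: algebra_simps)
  moreover have "u * u' * x + u * v' * z + v * y * u' \<in> R" "v * v' \<in> R"
    using uv assms by (auto intro!: RKadd[OF nf] RKmult[OF nf])
  ultimately show ?thesis unfolding copr_def by blast
qed

lemma copr_1: "copr R x 1"
  unfolding copr_def using RK0[OF nf] RK1[OF nf] by (intro bexI[of _ 0] bexI[of _ 1]) auto

lemma copr_pow: assumes "copr R x y" "x \<in> R" "y \<in> R" shows "copr R x (y ^ k)"
  by (induction k) (auto intro: copr_1 copr_mult assms RKpower[OF nf])

lemma copr_pow2: assumes "copr R x y" "x \<in> R" "y \<in> R" shows "copr R (x ^ m) (y ^ k)"
proof -
  have "copr R (y ^ k) x" using copr_sym[OF copr_pow[OF assms]] .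
  hence "copr R (y ^ k) (x ^ m)" using copr_pow[of "y ^ k" x m] RKpower[OF nf] assms by blast
  thus ?thesis by (rule copr_sym)
qed

lemma copr_a_aJ: assumes "i \<in> I" "B \<subseteq> I" "i \<notin> B" shows "copr R (a i) (aJ a B)"
proof -
  have "finite B" using assms I finite_subset by blast
  thus ?thesis using assms(2,3)
  proof (induction B rule: finite_induct)
    case empty thus ?case by (simp add: aJ_def copr_1)
  next
    case (insert j B)
    have c1: "copr R (a i) (a j)" unfolding copr_def using a_coprime[of i j] insert assms(1) by auto
    have "aJ a (insert j B) = a j * aJ a B" unfolding aJ_def using insert by simp
    thus ?case using copr_mult[OF c1 insert(3)] insert assms(1) a_int aJ_R by auto
  qed
qed

lemma copr_aJ_aJ: assumes "A \<subseteq> I" "B \<subseteq> I" "A \<inter> B = {}" shows "copr R (aJ a A) (aJ a B)"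
proof -
  have "finite A" using assms I finite_subset by blast
  thus ?thesis using assms(1,3)
  proof (induction A rule: finite_induct)
    case empty thus ?case by (simp add: aJ_def copr_1 copr_sym)
  next
    case (insert j A)
    have c1: "copr R (aJ a B) (a j)" using copr_a_aJ[of j B] insert assms(2) by (auto intro: copr_sym)
    have c2: "copr R (aJ a B) (aJ a A)" using insert by (auto intro: copr_sym)
    have "aJ a (insert j A) = a j * aJ a A" unfolding aJ_def using insert by simp
    thus ?case using copr_mult[OF c1 c2] insert assms a_int aJ_R by (auto intro: copr_sym)
  qed
qed

lemma decomposition:
  assumes red: "\<And>x. x \<in> K \<Longrightarrow> \<exists>\<rho>\<in>R. house K (x - \<rho>) \<le> C"
    and AB: "A \<subseteq> I" "B \<subseteq> I" "A \<inter> B = {}" "A \<union> B = I"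
    and c: "c \<in> RJ K a I"
  shows "\<exists>x\<in>RJ K a A. \<exists>y\<in>RJ K a B. c = x + y \<and> house K x \<le> C"
proof -
  obtain r k where r: "r \<in> R" "c = r / aJ a I ^ k" using c unfolding RJ_iff by blast
  define \<alpha> where "\<alpha> = aJ a A"
  define \<beta> where "\<beta> = aJ a B"
  have I_eq: "aJ a I = \<alpha> * \<beta>" unfolding \<alpha>_def \<beta>_def using aJ_union[OF AB(1-3)] AB(4) by simp
  have nz: "\<alpha> \<noteq> 0" "\<beta> \<noteq> 0" unfolding \<alpha>_def \<beta>_def using aJ_nz AB by auto
  have inR: "\<alpha> \<in> R" "\<beta> \<in> R" unfolding \<alpha>_def \<beta>_def using aJ_R AB by auto
  obtain u v where uv: "u \<in> R" "v \<in> R" "u * \<alpha> ^ k + v * \<beta> ^ k = 1"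
    using copr_pow2[OF copr_aJ_aJ[OF AB(1-3)] aJ_R[OF AB(1)] aJ_R[OF AB(2)], of k k]
    unfolding copr_def \<alpha>_def \<beta>_def by blast
  define x0 where "x0 = r * v / \<alpha> ^ k"
  define y0 where "y0 = r * u / \<beta> ^ k"
  have "x0 + y0 = r * (u * \<alpha> ^ k + v * \<beta> ^ k) / (\<alpha> ^ k * \<beta> ^ k)"
    unfolding x0_def y0_def using nz by (simp add: field_simps)
  also have "\<dots> = c" using uv(3) r(2) I_eq by (simp add: power_mult_distrib)
  finally have sum: "x0 + y0 = c" .
  have x0K: "x0 \<in> K" unfolding x0_def using r uv inR
    by (intro Kdivide[OF sfK[OF nf]] Kmult[OF sfK[OF nf]] Kpower[OF sfK[OF nf]] RK_K[OF nf])
  obtain \<rho> where \<rho>: "\<rho> \<in> R" "house K (x0 - \<rho>) \<le> C" using red[OF x0K] by blast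
  have "x0 - \<rho> = (r * v - \<rho> * \<alpha> ^ k) / \<alpha> ^ k" unfolding x0_def using nz by (simp add: field_simps)
  moreover have "r * v - \<rho> * \<alpha> ^ k \<in> R" using r uv \<rho> inR
    by (intro RKdiff[OF nf] RKmult[OF nf] RKpower[OF nf])
  ultimately have x: "x0 - \<rho> \<in> RJ K a A" unfolding \<alpha>_def using RJ_I by simp
  have "y0 + \<rho> = (r * u + \<rho> * \<beta> ^ k) / \<beta> ^ k" unfolding y0_def using nz by (simp add: field_simps)
  moreover have "r * u + \<rho> * \<beta> ^ k \<in> R" using r uv \<rho> inR
    by (intro RKadd[OF nf] RKmult[OF nf] RKpower[OF nf])
  ultimately have y: "y0 + \<rho> \<in> RJ K a B" unfolding \<beta>_def using RJ_I by simp
  have "c = (x0 - \<rho>) + (y0 + \<rho>)" using sum by simp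
  thus ?thesis using x y \<rho>(2) by blast
qed

end



lemma limsup_poly_bound:
  fixes h :: "nat \<Rightarrow> real" and C :: real and d :: nat
  assumes h: "\<And>k. 0 \<le> h k" "\<And>k. h k \<le> C * (real k + 1) ^ d"
  shows "limsup (\<lambda>n. ereal (h n powr (1 / real n))) \<le> 1"
proof -
  define C' where "C' = \<bar>C\<bar> + 1"
  have C': "C' > 0" unfolding C'_def by simp
  define u where "u n = (C' * (real n + 1) ^ d) powr (1 / real n)" for n
  have lim: "u \<longlonglongrightarrow> 1" unfolding u_def using C' by real_asymp
  have le: "eventually (\<lambda>n. ereal (h n powr (1 / real n)) \<le> ereal (u n)) sequentially"
  proof (rule eventually_sequentiallyI[of 1])
    fix n :: nat assume "n \<ge> 1"
    have p: "0 \<le> (real n + 1) ^ d" by simp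
    have "C * (real n + 1) ^ d \<le> C' * (real n + 1) ^ d"
      unfolding C'_def by (rule mult_right_mono[OF _ p]) simp
    hence "h n \<le> C' * (real n + 1) ^ d" using h(2)[of n] by linarith
    hence "h n powr (1 / real n) \<le> u n" unfolding u_def
      by (rule powr_mono2[rotated 2]) (simp_all add: h(1))
    thus "ereal (h n powr (1 / real n)) \<le> ereal (u n)" by simp
  qed
  have "limsup (\<lambda>n. ereal (h n powr (1 / real n))) \<le> limsup (\<lambda>n. ereal (u n))"
    by (rule Limsup_mono[OF le])
  also have "limsup (\<lambda>n. ereal (u n)) = ereal 1"
  proof (rule lim_imp_Limsup)
    show "\<not> trivial_limit sequentially" by simp
    show "(\<lambda>n. ereal (u n)) \<longlonglongrightarrow> ereal 1" using lim by (simp only: lim_ereal)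
  qed
  finally show ?thesis by (simp add: one_ereal_def)
qed



definition sr :: "'a :: comm_ring_1 set \<Rightarrow> bool" where
  "sr S \<longleftrightarrow> 0 \<in> S \<and> 1 \<in> S \<and> (\<forall>x\<in>S. \<forall>y\<in>S. x + y \<in> S \<and> x * y \<in> S \<and> - x \<in> S)"

lemma sr0: "sr S \<Longrightarrow> 0 \<in> S" unfolding sr_def by blast
lemma sr1: "sr S \<Longrightarrow> 1 \<in> S" unfolding sr_def by blast
lemma sradd: "sr S \<Longrightarrow> x \<in> S \<Longrightarrow> y \<in> S \<Longrightarrow> x + y \<in> S" unfolding sr_def by blast
lemma srmult: "sr S \<Longrightarrow> x \<in> S \<Longrightarrow> y \<in> S \<Longrightarrow> x * y \<in> S" unfolding sr_def by blast
lemma sruminus: "sr S \<Longrightarrow> x \<in> S \<Longrightarrow> - x \<in> S" unfolding sr_def by blast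
lemma srI: "0 \<in> S \<Longrightarrow> 1 \<in> S \<Longrightarrow> (\<And>x y. x \<in> S \<Longrightarrow> y \<in> S \<Longrightarrow> x + y \<in> S) \<Longrightarrow>
   (\<And>x y. x \<in> S \<Longrightarrow> y \<in> S \<Longrightarrow> x * y \<in> S) \<Longrightarrow> (\<And>x. x \<in> S \<Longrightarrow> - x \<in> S) \<Longrightarrow> sr S"
  unfolding sr_def by blast

lemma sr_sum: "sr S \<Longrightarrow> (\<And>s. s \<in> A \<Longrightarrow> f s \<in> S) \<Longrightarrow> sum f A \<in> S"
proof (induction A rule: infinite_finite_induct)
  case (insert x F) thus ?case by (simp add: sradd)
qed (auto simp: sr0)

lemma sr_prod: "sr S \<Longrightarrow> (\<And>s. s \<in> A \<Longrightarrow> f s \<in> S) \<Longrightarrow> prod f A \<in> S"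
proof (induction A rule: infinite_finite_induct)
  case (insert x F) thus ?case by (simp add: srmult)
qed (auto simp: sr1)

lemma sr_power: "sr S \<Longrightarrow> x \<in> S \<Longrightarrow> x ^ k \<in> S"
  by (induction k) (simp_all add: sr1 srmult)

lemma sr_sign: "sr S \<Longrightarrow> of_int (sign p) \<in> S"
  by (cases p rule: sign_cases) (simp_all add: sr1 sruminus)

lemma det_closed:
  assumes S: "sr S" and A: "A \<in> carrier_mat n n" and e: "\<And>i j. i < n \<Longrightarrow> j < n \<Longrightarrow> A $$ (i,j) \<in> S"
  shows "det A \<in> S"
proof -
  have "det A = (\<Sum> p \<in> {p. p permutes {0 ..< n}}. signof p * (\<Prod> i = 0 ..< n. A $$ (i, p i)))"
    unfolding det_def using carrier_matD[OF A] by (simp only: simp_thms if_True)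
  also have "\<dots> \<in> S"
  proof (rule sr_sum[OF S])
    fix p assume p: "p \<in> {p. p permutes {0 ..< n}}"
    have "(\<Prod> i = 0 ..< n. A $$ (i, p i)) \<in> S"
    proof (rule sr_prod[OF S])
      fix i assume i: "i \<in> {0..<n}"
      have "p i \<in> {0..<n}" using permutes_in_image[of p "{0..<n}" i] p i by simp
      thus "A $$ (i, p i) \<in> S" using i e by simp
    qed
    thus "signof p * (\<Prod> i = 0 ..< n. A $$ (i, p i)) \<in> S"
      by (rule srmult[OF S sr_sign[OF S]])
  qed
  finally show ?thesis .
qed

lemma adj_closed:
  assumes S: "sr S" and A: "A \<in> carrier_mat n n" and e: "\<And>i j. i < n \<Longrightarrow> j < n \<Longrightarrow> A $$ (i,j) \<in> S"
    and ij: "i < n" "j < n"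
  shows "adj_mat A $$ (i, j) \<in> S"
proof -
  have "adj_mat A $$ (i, j) = cofactor A j i" using A ij unfolding adj_mat_def by simp
  also have "\<dots> = (-1)^(j+i) * det (mat_delete A j i)" unfolding cofactor_def ..
  also have "\<dots> \<in> S"
  proof (rule srmult[OF S])
    show "(-1)^(j+i) \<in> S" by (rule sr_power[OF S sruminus[OF S sr1[OF S]]])
    show "det (mat_delete A j i) \<in> S"
    proof (rule det_closed[OF S, of _ "n - 1"])
      show "mat_delete A j i \<in> carrier_mat (n - 1) (n - 1)" using A unfolding carrier_mat_def by simp
      fix i' j' assume ij': "i' < n - 1" "j' < n - 1"
      have "mat_delete A j i $$ (i', j') =
         A $$ (if i' < j then i' else Suc i', if j' < i then j' else Suc j')"
        using A ij' unfolding mat_delete_def by simp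
      also have "\<dots> \<in> S" using ij' by (intro e) auto
      finally show "mat_delete A j i $$ (i', j') \<in> S" .
    qed
  qed
  finally show ?thesis .
qed



lemma sr_fps_over: assumes S: "sr S" shows "sr (fps_over S)"
proof (rule srI)
  show "0 \<in> fps_over S" unfolding fps_over_def using sr0[OF S] by simp
  show "1 \<in> fps_over S" unfolding fps_over_def using sr0[OF S] sr1[OF S] by simp
  show "f + g \<in> fps_over S" if "f \<in> fps_over S" "g \<in> fps_over S" for f g
    using that sradd[OF S] unfolding fps_over_def by simp
  show "- f \<in> fps_over S" if "f \<in> fps_over S" for f
    using that sruminus[OF S] unfolding fps_over_def by simp
  show "f * g \<in> fps_over S" if "f \<in> fps_over S" "g \<in> fps_over S" for f g
  proof -
    have "(f * g) $ n \<in> S" for n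
      unfolding fps_mult_nth using that unfolding fps_over_def
      by (intro sr_sum[OF S] srmult[OF S]) auto
    thus ?thesis unfolding fps_over_def by simp
  qed
qed

definition pb :: "complex set \<Rightarrow> complex set \<Rightarrow> complex fps \<Rightarrow> bool" where
  "pb K S f \<longleftrightarrow> f \<in> fps_over S \<and> (\<exists>C d. C \<ge> 0 \<and> (\<forall>k. house K (f $ k) \<le> C * (real k + 1) ^ d))"

lemma pbI: "f \<in> fps_over S \<Longrightarrow> C \<ge> 0 \<Longrightarrow> (\<And>k. house K (f $ k) \<le> C * (real k + 1) ^ d) \<Longrightarrow> pb K S f"
  unfolding pb_def by blast

lemma pow_mono_exp: "(real k + 1) ^ d \<le> (real k + 1) ^ (d + e)"
  by (rule power_increasing) auto

context
  fixes K S
  assumes nf: "number_field K" and S: "sr S" and SK: "S \<subseteq> K"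
begin

lemma pb_conv: "pb K S f \<Longrightarrow> f \<in> conv_fps_over K S"
proof -
  assume "pb K S f"
  then obtain C d where f: "f \<in> fps_over S" "\<And>k. house K (f $ k) \<le> C * (real k + 1) ^ d"
    unfolding pb_def by blast
  show ?thesis unfolding conv_fps_over_def
    using f limsup_poly_bound[of "\<lambda>k. house K (f $ k)" C d] house_nonneg[OF nf] by auto
qed

lemma fK: "f \<in> fps_over S \<Longrightarrow> f $ k \<in> K" using SK unfolding fps_over_def by auto

lemma sr_pb: "sr {f. pb K S f}"
proof (rule srI)
  show "0 \<in> {f. pb K S f}" unfolding pb_def using sr0[OF sr_fps_over[OF S]]
    by (auto simp: house_0[OF nf] intro!: exI[of _ 0])
  have h1: "house K ((1::complex fps) $ k) \<le> 1" for k
    by (rule house_le[OF nf]) (auto simp: s1[OF sfK[OF nf]] s0[OF sfK[OF nf]])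
  show "1 \<in> {f. pb K S f}" using sr1[OF sr_fps_over[OF S]] h1
    by (auto intro!: pbI[where C=1 and d=0])
  show "f + g \<in> {f. pb K S f}" if fg: "f \<in> {f. pb K S f}" "g \<in> {f. pb K S f}" for f g
  proof -
    obtain C1 d1 where f: "f \<in> fps_over S" "C1 \<ge> 0" "\<And>k. house K (f $ k) \<le> C1 * (real k + 1) ^ d1"
      using fg(1) unfolding pb_def by blast
    obtain C2 d2 where g: "g \<in> fps_over S" "C2 \<ge> 0" "\<And>k. house K (g $ k) \<le> C2 * (real k + 1) ^ d2"
      using fg(2) unfolding pb_def by blast
    have "house K ((f + g) $ k) \<le> (C1 + C2) * (real k + 1) ^ (d1 + d2)" for k
    proof -
      have "house K ((f + g) $ k) \<le> house K (f $ k) + house K (g $ k)"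
        using house_add[OF nf fK[OF f(1)] fK[OF g(1)]] by simp
      also have "\<dots> \<le> C1 * (real k + 1) ^ (d1 + d2) + C2 * (real k + 1) ^ (d1 + d2)"
        using f(2) f(3)[of k] g(2) g(3)[of k] pow_mono_exp[of k d1 d2] pow_mono_exp[of k d2 d1]
        by (intro add_mono) (auto simp: add.commute intro: order_trans mult_left_mono)
      finally show ?thesis by (simp add: distrib_right)
    qed
    thus ?thesis using f g sradd[OF sr_fps_over[OF S]]
      by (auto intro!: pbI[where C="C1 + C2" and d="d1 + d2"])
  qed
  show "- f \<in> {f. pb K S f}" if fg: "f \<in> {f. pb K S f}" for f
  proof -
    obtain C1 d1 where f: "f \<in> fps_over S" "C1 \<ge> 0" "\<And>k. house K (f $ k) \<le> C1 * (real k + 1) ^ d1"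
      using fg(1) unfolding pb_def by blast
    have "house K ((- f) $ k) \<le> C1 * (real k + 1) ^ d1" for k
      using house_uminus[OF nf fK[OF f(1)], of k] f(3)[of k] by simp
    thus ?thesis unfolding pb_def using f sruminus[OF sr_fps_over[OF S]] by auto
  qed
  show "f * g \<in> {f. pb K S f}" if fg: "f \<in> {f. pb K S f}" "g \<in> {f. pb K S f}" for f g
  proof -
    obtain C1 d1 where f: "f \<in> fps_over S" "C1 \<ge> 0" "\<And>k. house K (f $ k) \<le> C1 * (real k + 1) ^ d1"
      using fg(1) unfolding pb_def by blast
    obtain C2 d2 where g: "g \<in> fps_over S" "C2 \<ge> 0" "\<And>k. house K (g $ k) \<le> C2 * (real k + 1) ^ d2"
      using fg(2) unfolding pb_def by blast
    have "house K ((f * g) $ k) \<le> (C1 * C2) * (real k + 1) ^ (d1 + d2 + 1)" for k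
    proof -
      have "house K ((f * g) $ k) = house K (\<Sum>i=0..k. f $ i * g $ (k - i))"
        by (simp add: fps_mult_nth)
      also have "\<dots> \<le> (\<Sum>i=0..k. house K (f $ i * g $ (k - i)))"
        by (rule house_sum[OF nf]) (intro Kmult[OF sfK[OF nf]] fK f(1) g(1))
      also have "\<dots> \<le> (\<Sum>i=0..k. (C1 * C2) * (real k + 1) ^ (d1 + d2))"
      proof (rule sum_mono)
        fix i assume i: "i \<in> {0..k}"
        have "house K (f $ i * g $ (k - i)) \<le> house K (f $ i) * house K (g $ (k - i))"
          by (rule house_mult[OF nf fK[OF f(1)] fK[OF g(1)]])
        also have "\<dots> \<le> (C1 * (real k + 1) ^ d1) * (C2 * (real k + 1) ^ d2)"
        proof (rule mult_mono)
          have "(real i + 1) ^ d1 \<le> (real k + 1) ^ d1" using i by (intro power_mono) auto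
          thus "house K (f $ i) \<le> C1 * (real k + 1) ^ d1"
            using f(3)[of i] f(2) by (meson mult_left_mono order_trans)
          have "(real (k - i) + 1) ^ d2 \<le> (real k + 1) ^ d2" using i by (intro power_mono) auto
          thus "house K (g $ (k - i)) \<le> C2 * (real k + 1) ^ d2"
            using g(3)[of "k - i"] g(2) by (meson mult_left_mono order_trans)
          show "0 \<le> C1 * (real k + 1) ^ d1" using f(2) by simp
          show "0 \<le> house K (g $ (k - i))" by (rule house_nonneg[OF nf])
        qed
        also have "\<dots> = (C1 * C2) * (real k + 1) ^ (d1 + d2)" by (simp add: power_add)
        finally show "house K (f $ i * g $ (k - i)) \<le> (C1 * C2) * (real k + 1) ^ (d1 + d2)" .
      qed
      also have "\<dots> = (C1 * C2) * (real k + 1) ^ (d1 + d2 + 1)" by simp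
      finally show ?thesis .
    qed
    thus ?thesis using f g srmult[OF sr_fps_over[OF S]]
      by (auto intro!: pbI[where C="C1 * C2" and d="d1 + d2 + 1"])
  qed
qed

end



context
  fixes n :: nat and bc :: "nat \<Rightarrow> nat \<Rightarrow> nat \<Rightarrow> complex" and dec :: "complex \<Rightarrow> complex \<times> complex"
begin

function Mc :: "nat \<Rightarrow> nat \<Rightarrow> nat \<Rightarrow> complex" where
  "Mc k p q = (if k = 0 then (if p = q then 1 else 0)
     else - fst (dec (\<Sum>m<k. \<Sum>r<n. Mc m p r * bc (k - m) r q)))"
  by auto
termination by (relation "measure (\<lambda>(k,p,q). k)") auto

declare Mc.simps[simp del]

end


lemma mult_mat_entry:
  assumes A: "A \<in> carrier_mat n n" and B: "B \<in> carrier_mat n n" and pq: "p < n" "q < n"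
  shows "(A * B) $$ (p, q) = (\<Sum>r<n. A $$ (p, r) * B $$ (r, q))"
  using A B pq by (simp add: scalar_prod_def atLeast0LessThan)

lemma construction:
  fixes b :: "complex fps mat" and X Y T :: "complex set" and Q :: "complex \<Rightarrow> complex \<Rightarrow> bool"
  assumes X: "sr X" and Y: "sr Y" and T: "sr T" and XT: "X \<subseteq> T"
    and b: "b \<in> carrier_mat n n" and bT: "\<And>p q k. p < n \<Longrightarrow> q < n \<Longrightarrow> b $$ (p,q) $ k \<in> T"
    and b0: "\<And>p q. p < n \<Longrightarrow> q < n \<Longrightarrow> b $$ (p,q) $ 0 = (if p = q then 1 else 0)"
    and dec: "\<And>c. c \<in> T \<Longrightarrow> \<exists>x\<in>X. \<exists>y\<in>Y. c = x + y \<and> Q x y"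
  shows "\<exists>M. M \<in> carrier_mat n n \<and> (\<forall>p<n. \<forall>q<n. M $$ (p,q) \<in> fps_over X \<and> (M * b) $$ (p,q) \<in> fps_over Y
     \<and> M $$ (p,q) $ 0 = (if p = q then 1 else 0) \<and> (M * b) $$ (p,q) $ 0 = (if p = q then 1 else 0)
     \<and> (\<forall>k>0. Q (- (M $$ (p,q) $ k)) ((M * b) $$ (p,q) $ k)))"
proof -
  define D where "D c = (SOME xy. fst xy \<in> X \<and> snd xy \<in> Y \<and> c = fst xy + snd xy \<and> Q (fst xy) (snd xy))" for c
  have Dp: "fst (D c) \<in> X \<and> snd (D c) \<in> Y \<and> c = fst (D c) + snd (D c) \<and> Q (fst (D c)) (snd (D c))"
    if c: "c \<in> T" for c
  proof -
    obtain x y where xy: "x \<in> X" "y \<in> Y" "c = x + y" "Q x y" using dec[OF c] by blast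
    have "\<exists>xy. fst xy \<in> X \<and> snd xy \<in> Y \<and> c = fst xy + snd xy \<and> Q (fst xy) (snd xy)"
      using xy by (intro exI[of _ "(x,y)"]) simp
    thus ?thesis unfolding D_def by (rule someI_ex)
  qed
  define bc where "bc k r q = (if r < n \<and> q < n then b $$ (r,q) $ k else 0)" for k r q
  have bcT: "bc k r q \<in> T" for k r q unfolding bc_def using bT sr0[OF T] by auto
  define S where "S k p q = (\<Sum>m<k. \<Sum>r<n. Mc n bc D m p r * bc (k - m) r q)" for k p q
  have mcX: "Mc n bc D k p q \<in> X" for k p q
  proof (induction k arbitrary: p q rule: less_induct)
    case (less k)
    show ?case
    proof (cases "k = 0")
      case True thus ?thesis using sr0[OF X] sr1[OF X] by (simp add: Mc.simps)
    next
      case False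
      have "S k p q \<in> T" unfolding S_def
        using less XT bcT by (intro sr_sum[OF T] srmult[OF T]) auto
      hence "fst (D (S k p q)) \<in> X" using Dp by blast
      thus ?thesis using False sruminus[OF X] by (simp add: Mc.simps[of n bc D k] S_def)
    qed
  qed
  have ST: "S k p q \<in> T" for k p q unfolding S_def
    using mcX XT bcT by (intro sr_sum[OF T] srmult[OF T]) auto
  define M where "M = mat n n (\<lambda>(p,q). Abs_fps (\<lambda>k. Mc n bc D k p q))"
  have M: "M \<in> carrier_mat n n" unfolding M_def by simp
  have Mpq: "M $$ (p,q) $ k = Mc n bc D k p q" if "p < n" "q < n" for p q k
    using that unfolding M_def by simp
  have Nk: "(M * b) $$ (p,q) $ k = Mc n bc D k p q + S k p q" if pq: "p < n" "q < n" for p q k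
  proof -
    have "(M * b) $$ (p,q) $ k = (\<Sum>r<n. (M $$ (p, r) * b $$ (r, q)) $ k)"
      by (simp add: mult_mat_entry[OF M b pq] fps_sum_nth)
    also have "\<dots> = (\<Sum>r<n. \<Sum>m=0..k. Mc n bc D m p r * bc (k - m) r q)"
      by (intro sum.cong refl) (simp add: fps_mult_nth Mpq pq bc_def)
    also have "\<dots> = (\<Sum>r<n. (\<Sum>m<k. Mc n bc D m p r * bc (k - m) r q) + Mc n bc D k p r * bc 0 r q)"
      by (intro sum.cong refl) (simp add: atLeast0AtMost lessThan_Suc_atMost[symmetric])
    also have "\<dots> = S k p q + (\<Sum>r<n. Mc n bc D k p r * bc 0 r q)"
      unfolding S_def sum.distrib by (simp add: sum.swap[of _ "{..<k}"])
    also have "(\<Sum>r<n. Mc n bc D k p r * bc 0 r q) = (\<Sum>r<n. if r = q then Mc n bc D k p q else 0)"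
      by (intro sum.cong refl) (simp add: bc_def b0 pq)
    also have "\<dots> = Mc n bc D k p q" using pq by simp
    finally show ?thesis by simp
  qed
  have main: "M $$ (p,q) \<in> fps_over X \<and> (M * b) $$ (p,q) \<in> fps_over Y
     \<and> M $$ (p,q) $ 0 = (if p = q then 1 else 0) \<and> (M * b) $$ (p,q) $ 0 = (if p = q then 1 else 0)
     \<and> (\<forall>k>0. Q (- (M $$ (p,q) $ k)) ((M * b) $$ (p,q) $ k))" if pq: "p < n" "q < n" for p q
  proof (intro conjI allI impI)
    show "M $$ (p,q) \<in> fps_over X" unfolding fps_over_def using Mpq[OF pq] mcX by simp
    show M0: "M $$ (p,q) $ 0 = (if p = q then 1 else 0)" using Mpq[OF pq] by (simp add: Mc.simps)
    show N0: "(M * b) $$ (p,q) $ 0 = (if p = q then 1 else 0)" using Nk[OF pq, of 0]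
      by (simp add: Mc.simps S_def)
    have Nk': "(M * b) $$ (p,q) $ k = snd (D (S k p q))" "- (M $$ (p,q) $ k) = fst (D (S k p q))"
      if "k > 0" for k
    proof -
      have e: "Mc n bc D k p q = - fst (D (S k p q))" using that
        by (simp add: Mc.simps[of n bc D k] S_def)
      show "(M * b) $$ (p,q) $ k = snd (D (S k p q))" using Nk[OF pq, of k] e Dp[OF ST[of k p q]]
        by (metis add.commute add_diff_cancel_right' diff_conv_add_uminus)
      show "- (M $$ (p,q) $ k) = fst (D (S k p q))" using e Mpq[OF pq] by simp
    qed
    show "(M * b) $$ (p,q) \<in> fps_over Y" unfolding fps_over_def
    proof (rule CollectI, rule allI)
      fix k show "(M * b) $$ (p,q) $ k \<in> Y"
        using Nk'(1)[of k] Dp[OF ST[of k p q]] N0 sr0[OF Y] sr1[OF Y] by (cases "k = 0") auto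
    qed
    fix k :: nat assume "k > 0"
    thus "Q (- (M $$ (p,q) $ k)) ((M * b) $$ (p,q) $ k)" using Nk'[of k] Dp[OF ST[of k p q]] by simp
  qed
  show ?thesis using M main by blast
qed



interpretation fls_hom: comm_ring_hom "fps_to_fls :: complex fps \<Rightarrow> complex fls"
  by unfold_locales (simp_all add: fls_times_fps_to_fls)

interpretation nth0_hom: comm_ring_hom "\<lambda>f :: complex fps. f $ 0"
  by unfold_locales (simp_all add: fps_mult_nth)

lemma det_nz:
  fixes A :: "complex fps mat"
  assumes A: "A \<in> carrier_mat n n" and A0: "\<And>p q. p < n \<Longrightarrow> q < n \<Longrightarrow> A $$ (p,q) $ 0 = (if p = q then 1 else 0)"
  shows "det A \<noteq> 0"
proof -
  have "map_mat (\<lambda>f. f $ 0) A = 1\<^sub>m n" using A A0 by (intro eq_matI) auto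
  hence "det (map_mat (\<lambda>f. f $ 0) A) = 1" by simp
  hence "det A $ 0 = 1" by (simp add: nth0_hom.hom_det)
  thus ?thesis by auto
qed

definition Quot_elems :: "complex fps set \<Rightarrow> complex fls mat \<Rightarrow> bool" where
  "Quot_elems D B \<longleftrightarrow> elements_mat B \<subseteq> Quot D"

lemma inverse_construction:
  fixes A :: "complex fps mat" and P :: "complex fps set"
  assumes A: "A \<in> carrier_mat n n" and A0: "\<And>p q. p < n \<Longrightarrow> q < n \<Longrightarrow> A $$ (p,q) $ 0 = (if p = q then 1 else 0)"
    and P: "sr P" and AP: "\<And>p q. p < n \<Longrightarrow> q < n \<Longrightarrow> A $$ (p,q) \<in> P"
  defines "Ai \<equiv> inverse (fps_to_fls (det A)) \<cdot>\<^sub>m map_mat fps_to_fls (adj_mat A)"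
  shows "Ai \<in> carrier_mat n n" "map_mat fps_to_fls A * Ai = 1\<^sub>m n" "Ai * map_mat fps_to_fls A = 1\<^sub>m n"
    "\<And>D. P \<subseteq> D \<Longrightarrow> elements_mat Ai \<subseteq> Quot D"
    "\<And>D. P \<subseteq> D \<Longrightarrow> elements_mat (map_mat fps_to_fls A) \<subseteq> Quot D"
proof -
  define d where "d = fps_to_fls (det A)"
  have dnz: "d \<noteq> 0" unfolding d_def using det_nz[OF A A0] by simp
  have adj: "adj_mat A \<in> carrier_mat n n" "A * adj_mat A = det A \<cdot>\<^sub>m 1\<^sub>m n" "adj_mat A * A = det A \<cdot>\<^sub>m 1\<^sub>m n"
    using adj_mat[OF A] by auto
  have inv1: "inverse d \<cdot>\<^sub>m (d \<cdot>\<^sub>m 1\<^sub>m n) = 1\<^sub>m n" using dnz by (intro eq_matI) auto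
  have mA: "map_mat fps_to_fls A \<in> carrier_mat n n" using A by simp
  have madj: "map_mat fps_to_fls (adj_mat A) \<in> carrier_mat n n" using adj by simp
  have msm: "map_mat fps_to_fls (det A \<cdot>\<^sub>m 1\<^sub>m n) = d \<cdot>\<^sub>m 1\<^sub>m n"
    unfolding d_def by (intro eq_matI) auto
  show Ai: "Ai \<in> carrier_mat n n" unfolding Ai_def using adj by simp
  have "map_mat fps_to_fls A * Ai = inverse d \<cdot>\<^sub>m (map_mat fps_to_fls A * map_mat fps_to_fls (adj_mat A))"
    unfolding Ai_def d_def by (rule mult_smult_distrib[OF mA madj])
  also have "map_mat fps_to_fls A * map_mat fps_to_fls (adj_mat A) = d \<cdot>\<^sub>m 1\<^sub>m n"
    using fls_hom.mat_hom_mult[OF A adj(1)] adj(2) msm by simp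
  finally show "map_mat fps_to_fls A * Ai = 1\<^sub>m n" using inv1 by simp
  have "Ai * map_mat fps_to_fls A = inverse d \<cdot>\<^sub>m (map_mat fps_to_fls (adj_mat A) * map_mat fps_to_fls A)"
    unfolding Ai_def d_def by (rule mult_smult_assoc_mat[OF madj mA])
  also have "map_mat fps_to_fls (adj_mat A) * map_mat fps_to_fls A = d \<cdot>\<^sub>m 1\<^sub>m n"
    using fls_hom.mat_hom_mult[OF adj(1) A] adj(3) msm by simp
  finally show "Ai * map_mat fps_to_fls A = 1\<^sub>m n" using inv1 by simp
  fix D assume PD: "P \<subseteq> D"
  have detP: "det A \<in> P" using det_closed[OF P A AP] .
  show "elements_mat Ai \<subseteq> Quot D"
  proof
    fix z assume "z \<in> elements_mat Ai"
    then obtain i j where ij: "i < n" "j < n" "z = Ai $$ (i,j)" using Ai by auto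
    have "z = fps_to_fls (adj_mat A $$ (i,j)) / fps_to_fls (det A)"
      using ij adj(1) unfolding Ai_def by (simp add: divide_inverse mult.commute)
    moreover have "adj_mat A $$ (i,j) \<in> D" using adj_closed[OF P A AP ij(1,2)] PD by auto
    ultimately show "z \<in> Quot D" unfolding Quot_def using detP PD det_nz[OF A A0] by blast
  qed
  show "elements_mat (map_mat fps_to_fls A) \<subseteq> Quot D"
  proof
    fix z assume "z \<in> elements_mat (map_mat fps_to_fls A)"
    then obtain i j where ij: "i < n" "j < n" "z = map_mat fps_to_fls A $$ (i,j)" using mA by auto
    have "z = fps_to_fls (A $$ (i,j)) / fps_to_fls 1" using ij A by simp
    moreover have "A $$ (i,j) \<in> D" "1 \<in> D" using AP[OF ij(1,2)] sr1[OF P] PD by auto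
    ultimately show "z \<in> Quot D" unfolding Quot_def by fastforce
  qed
qed



lemma assemble:
  fixes b M :: "complex fps mat" and P1 P2 D2 :: "complex fps set" and Df :: "'j \<Rightarrow> complex fps set"
  assumes b: "b \<in> carrier_mat n n" and M: "M \<in> carrier_mat n n"
    and M0: "\<And>p q. p < n \<Longrightarrow> q < n \<Longrightarrow> M $$ (p,q) $ 0 = (if p = q then 1 else 0)"
    and N0: "\<And>p q. p < n \<Longrightarrow> q < n \<Longrightarrow> (M * b) $$ (p,q) $ 0 = (if p = q then 1 else 0)"
    and P1: "sr P1" and P2: "sr P2"
    and MP: "\<And>p q. p < n \<Longrightarrow> q < n \<Longrightarrow> M $$ (p,q) \<in> P1"
    and NP: "\<And>p q. p < n \<Longrightarrow> q < n \<Longrightarrow> (M * b) $$ (p,q) \<in> P2"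
    and Df: "\<And>j. j \<in> J \<Longrightarrow> P1 \<subseteq> Df j" and D2: "P2 \<subseteq> D2"
  shows "\<exists>b'\<in>GL n (\<Inter>j\<in>J. Quot (Df j)). \<exists>bi\<in>GL n (Quot D2). map_mat fps_to_fls b = b' * bi"
proof -
  have N: "M * b \<in> carrier_mat n n" using M b by simp
  define Mi where "Mi = inverse (fps_to_fls (det M)) \<cdot>\<^sub>m map_mat fps_to_fls (adj_mat M)"
  define Ni where "Ni = inverse (fps_to_fls (det (M * b))) \<cdot>\<^sub>m map_mat fps_to_fls (adj_mat (M * b))"
  note IM = inverse_construction[OF M M0 P1 MP, folded Mi_def]
  note IN = inverse_construction[OF N N0 P2 NP, folded Ni_def]
  have mM: "map_mat fps_to_fls M \<in> carrier_mat n n" using M by simp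
  have mb: "map_mat fps_to_fls b \<in> carrier_mat n n" using b by simp
  have mN: "map_mat fps_to_fls (M * b) \<in> carrier_mat n n" using N by simp
  have "Mi \<in> GL n (\<Inter>j\<in>J. Quot (Df j))" unfolding GL_def
  proof (intro CollectI conjI bexI[of _ "map_mat fps_to_fls M"])
    show "Mi \<in> carrier_mat n n" by (rule IM(1))
    show "elements_mat Mi \<subseteq> (\<Inter>j\<in>J. Quot (Df j))" using IM(4) Df by blast
    show "elements_mat (map_mat fps_to_fls M) \<subseteq> (\<Inter>j\<in>J. Quot (Df j))" using IM(5) Df by blast
    show "Mi * map_mat fps_to_fls M = 1\<^sub>m n" by (rule IM(3))
    show "map_mat fps_to_fls M * Mi = 1\<^sub>m n" by (rule IM(2))
  qed (rule mM)
  moreover have "map_mat fps_to_fls (M * b) \<in> GL n (Quot D2)" unfolding GL_def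
  proof (intro CollectI conjI bexI[of _ Ni])
    show "map_mat fps_to_fls (M * b) \<in> carrier_mat n n" by (rule mN)
    show "elements_mat Ni \<subseteq> Quot D2" using IN(4) D2 by blast
    show "elements_mat (map_mat fps_to_fls (M * b)) \<subseteq> Quot D2" using IN(5) D2 by blast
    show "Ni * map_mat fps_to_fls (M * b) = 1\<^sub>m n" by (rule IN(3))
    show "map_mat fps_to_fls (M * b) * Ni = 1\<^sub>m n" by (rule IN(2))
  qed (rule IN(1))
  moreover have "map_mat fps_to_fls b = Mi * map_mat fps_to_fls (M * b)"
  proof -
    have "Mi * map_mat fps_to_fls (M * b) = Mi * (map_mat fps_to_fls M * map_mat fps_to_fls b)"
      using fls_hom.mat_hom_mult[OF M b] by simp
    also have "\<dots> = (Mi * map_mat fps_to_fls M) * map_mat fps_to_fls b"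
      using IM(1) mM mb by simp
    also have "\<dots> = map_mat fps_to_fls b" using IM(3) mb by simp
    finally show ?thesis by simp
  qed
  ultimately show ?thesis by blast
qed



lemma conv_mono: "S \<subseteq> S' \<Longrightarrow> conv_fps_over K S \<subseteq> conv_fps_over K S'"
  unfolding conv_fps_over_def fps_over_def by auto

lemma fps_over_mono: "S \<subseteq> S' \<Longrightarrow> fps_over S \<subseteq> fps_over S'"
  unfolding fps_over_def by auto

lemma conv_sub: "conv_fps_over K S \<subseteq> fps_over S"
  unfolding conv_fps_over_def by auto

theorem proposition3p4:
  fixes K :: "complex set" and I :: "'i set" and i1 :: 'i and a :: "'i \<Rightarrow> complex"
    and n :: nat and b :: "complex fps mat"
  assumes K: "number_field K"
    and I: "finite I" "i1 \<in> I"
    and a_int: "\<And>i. i \<in> I \<Longrightarrow> a i \<in> ring_of_integers K"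
    and a_nz: "\<And>i. i \<in> I \<Longrightarrow> a i \<noteq> 0"
    and a_nonunit: "\<And>i. i \<in> I \<Longrightarrow> \<not> (\<exists>u \<in> ring_of_integers K. a i * u = 1)"
    and a_coprime: "\<And>i j. i \<in> I \<Longrightarrow> j \<in> I \<Longrightarrow> i \<noteq> j \<Longrightarrow>
        (\<exists>x \<in> ring_of_integers K. \<exists>y \<in> ring_of_integers K. x * a i + y * a j = 1)"
    and b: "b \<in> carrier_mat n n" "elements_mat b \<subseteq> DJ K a i1 I"
    and b_close: "t_abs_mat (b - 1\<^sub>m n) < 1"
  shows "\<forall>i \<in> I. \<exists>b' \<in> GL n (Qi' K a i1 I i). \<exists>bi \<in> GL n (Qi K a i1 I i).
           map_mat fps_to_fls b = b' * bi"
proof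
  fix i assume i: "i \<in> I"
  note ctx = K I(1) a_int a_nz a_coprime
  have sfK: "subfield_C K" by (rule sfK[OF K])
  obtain C where C: "C \<ge> 0" "\<And>x. x \<in> K \<Longrightarrow> \<exists>\<rho>\<in>ring_of_integers K. house K (x - \<rho>) \<le> C"
    using reduction[OF K] by blast
  have srRJ: "sr (RJ K a J)" if J: "J \<subseteq> I" for J
    by (rule srI) (auto intro: RJ_0[where K=K and I=I and a=a, OF ctx] RJ_1[where K=K and I=I and a=a, OF ctx] RJ_add[where K=K and I=I and a=a, OF ctx J] RJ_mult[where K=K and I=I and a=a, OF ctx J] RJ_uminus[where K=K and I=I and a=a, OF ctx])
  have RJK: "RJ K a J \<subseteq> K" if J: "J \<subseteq> I" for J
    using RJ_K[where K=K and I=I and a=a, OF ctx J] by blast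
  have DI: "DJ K a i1 I = fps_over (RJ K a I)" unfolding DJ_def using I(2) by simp
  have bT: "b $$ (p,q) $ k \<in> RJ K a I" if "p < n" "q < n" for p q k
  proof -
    have "b $$ (p,q) \<in> elements_mat b" using b(1) that by blast
    hence "b $$ (p,q) \<in> fps_over (RJ K a I)" using b(2) DI by auto
    thus ?thesis unfolding fps_over_def by simp
  qed
  have b0: "b $$ (p,q) $ 0 = (if p = q then 1 else 0)" if pq: "p < n" "q < n" for p q
  proof -
    define f where "f = (b - 1\<^sub>m n) $$ (p,q)"
    have fe: "f \<in> elements_mat (b - 1\<^sub>m n)" unfolding f_def using b(1) pq by (intro elements_matI[of "b - 1\<^sub>m n" n n p q]) auto
    have "t_abs f \<le> t_abs_mat (b - 1\<^sub>m n)" unfolding t_abs_mat_def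
      using fe by (intro Max_ge) (auto simp: elements_mat_def)
    hence lt: "t_abs f < 1" using b_close by simp
    have "f $ 0 = 0"
    proof (cases "f = 0")
      case False
      hence "exp (- real (subdegree f)) < 1" using lt unfolding t_abs_def by simp
      hence "subdegree f > 0" by (cases "subdegree f = 0") auto
      thus ?thesis by auto
    qed simp
    moreover have "f = b $$ (p,q) - 1\<^sub>m n $$ (p,q)" unfolding f_def
      by (rule index_minus_mat(1)) (simp_all add: pq)
    moreover have "1\<^sub>m n $$ (p,q) = (if p = q then (1::complex fps) else 0)" by (rule index_one_mat(1)[OF pq])
    ultimately show ?thesis by (cases "p = q") simp_all
  qed
  have h1: "house K 1 \<le> 1"
    by (rule house_le[OF K]) (simp add: s1[OF sfK])
  have h0: "house K 0 = 0" by (rule house_0[OF K])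
  have hdelta: "house K (if p = q then 1 else 0) \<le> max C 1" for p q :: nat
    using h1 h0 by auto
  have srRI: "sr (RJ K a I)" by (rule srRJ) simp
  show "\<exists>b' \<in> GL n (Qi' K a i1 I i). \<exists>bi \<in> GL n (Qi K a i1 I i). map_mat fps_to_fls b = b' * bi"
  proof (cases "i = i1")
    case False
    define X where "X = RJ K a {i}"
    define Y where "Y = RJ K a (I - {i})"
    have srX: "sr X" unfolding X_def using i by (intro srRJ) auto
    have srY: "sr Y" unfolding Y_def by (intro srRJ) auto
    have XI: "X \<subseteq> RJ K a I" unfolding X_def using i by (intro RJ_mono[where K=K and I=I and a=a, OF ctx]) auto
    have XK: "X \<subseteq> K" unfolding X_def using i by (intro RJK) auto
    have dec: "\<exists>x\<in>X. \<exists>y\<in>Y. c = x + y \<and> house K x \<le> C" if c: "c \<in> RJ K a I" for c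
      unfolding X_def Y_def using i by (intro decomposition[where K=K and I=I and a=a, OF ctx C(2) _ _ _ _ c]) auto
    obtain M where M: "M \<in> carrier_mat n n" and
      Mp: "\<And>p q. p < n \<Longrightarrow> q < n \<Longrightarrow> M $$ (p,q) \<in> fps_over X \<and> (M * b) $$ (p,q) \<in> fps_over Y
     \<and> M $$ (p,q) $ 0 = (if p = q then 1 else 0) \<and> (M * b) $$ (p,q) $ 0 = (if p = q then 1 else 0)
     \<and> (\<forall>k>0. house K (- (M $$ (p,q) $ k)) \<le> C)"
      using construction[OF srX srY srRI XI b(1) bT b0 dec] by blast
    have MP: "M $$ (p,q) \<in> {f. pb K X f}" if pq: "p < n" "q < n" for p q
    proof (intro CollectI pbI[where C = "max C 1" and d = 0])
      show "M $$ (p,q) \<in> fps_over X" using Mp[OF pq] by blast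
      show "0 \<le> max C 1" by simp
      fix k
      show "house K (M $$ (p,q) $ k) \<le> max C 1 * (real k + 1) ^ 0"
      proof (cases "k = 0")
        case True thus ?thesis using Mp[OF pq] hdelta[of p q] by simp
      next
        case False
        have mK: "- (M $$ (p,q) $ k) \<in> K" using Mp[OF pq] XK Kuminus[OF sfK] unfolding fps_over_def by blast
        have "house K (M $$ (p,q) $ k) = house K (- (- (M $$ (p,q) $ k)))" by simp
        also have "\<dots> \<le> house K (- (M $$ (p,q) $ k))" by (rule house_uminus[OF K mK])
        also have "\<dots> \<le> C" using Mp[OF pq] False by simp
        finally show ?thesis by simp
      qed
    qed
    have "\<exists>b'\<in>GL n (\<Inter>j\<in>I - {i}. Quot (DJ K a i1 (I - {j}))). \<exists>bi\<in>GL n (Quot (DJ K a i1 (I - {i}))).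
        map_mat fps_to_fls b = b' * bi"
    proof (rule assemble[OF b(1) M _ _ sr_pb[OF K srX XK] sr_fps_over[OF srY]])
      show "M $$ (p,q) $ 0 = (if p = q then 1 else 0)" if "p < n" "q < n" for p q using Mp[OF that] by blast
      show "(M * b) $$ (p,q) $ 0 = (if p = q then 1 else 0)" if "p < n" "q < n" for p q using Mp[OF that] by blast
      show "M $$ (p,q) \<in> {f. pb K X f}" if "p < n" "q < n" for p q using MP[OF that] .
      show "(M * b) $$ (p,q) \<in> fps_over Y" if "p < n" "q < n" for p q using Mp[OF that] by blast
      show "fps_over Y \<subseteq> DJ K a i1 (I - {i})" unfolding DJ_def Y_def using I(2) False by simp
      fix j assume j: "j \<in> I - {i}"
      have XJ: "X \<subseteq> RJ K a (I - {j})" unfolding X_def using i j by (intro RJ_mono[where K=K and I=I and a=a, OF ctx]) auto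
      show "{f. pb K X f} \<subseteq> DJ K a i1 (I - {j})"
      proof (cases "j = i1")
        case True
        have "{f. pb K X f} \<subseteq> conv_fps_over K X" using pb_conv[OF K srX XK] by blast
        also have "\<dots> \<subseteq> conv_fps_over K (RJ K a (I - {j}))" by (rule conv_mono[OF XJ])
        finally show ?thesis unfolding DJ_def using True by simp
      next
        case False
        have "{f. pb K X f} \<subseteq> fps_over X" unfolding pb_def by blast
        also have "\<dots> \<subseteq> fps_over (RJ K a (I - {j}))" by (rule fps_over_mono[OF XJ])
        finally show ?thesis unfolding DJ_def using False I(2) by simp
      qed
    qed
    thus ?thesis unfolding Qi'_def Qi_def by simp
  next
    case True
    define X where "X = RJ K a {i1}"
    define Y where "Y = RJ K a (I - {i1})"
    have srX: "sr X" unfolding X_def using I(2) by (intro srRJ) auto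
    have srY: "sr Y" unfolding Y_def by (intro srRJ) auto
    have XI: "X \<subseteq> RJ K a I" unfolding X_def using I(2) by (intro RJ_mono[where K=K and I=I and a=a, OF ctx]) auto
    have YK: "Y \<subseteq> K" unfolding Y_def by (intro RJK) auto
    have dec: "\<exists>x\<in>X. \<exists>y\<in>Y. c = x + y \<and> house K y \<le> C" if c: "c \<in> RJ K a I" for c
    proof -
      have "\<exists>x\<in>RJ K a (I - {i1}). \<exists>y\<in>RJ K a {i1}. c = x + y \<and> house K x \<le> C"
        by (rule decomposition[where K=K and I=I and a=a, OF ctx C(2)]) (use I(2) c in auto)
      then obtain x y where xy: "x \<in> Y" "y \<in> X" "c = x + y" "house K x \<le> C"
        unfolding X_def Y_def by blast
      have "c = y + x \<and> house K x \<le> C" using xy by simp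
      thus ?thesis using xy(1,2) by blast
    qed
    obtain M where M: "M \<in> carrier_mat n n" and
      Mp: "\<And>p q. p < n \<Longrightarrow> q < n \<Longrightarrow> M $$ (p,q) \<in> fps_over X \<and> (M * b) $$ (p,q) \<in> fps_over Y
     \<and> M $$ (p,q) $ 0 = (if p = q then 1 else 0) \<and> (M * b) $$ (p,q) $ 0 = (if p = q then 1 else 0)
     \<and> (\<forall>k>0. house K ((M * b) $$ (p,q) $ k) \<le> C)"
      using construction[OF srX srY srRI XI b(1) bT b0 dec] by blast
    have NP: "(M * b) $$ (p,q) \<in> {f. pb K Y f}" if pq: "p < n" "q < n" for p q
    proof (intro CollectI pbI[where C = "max C 1" and d = 0])
      show "(M * b) $$ (p,q) \<in> fps_over Y" using Mp[OF pq] by blast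
      show "0 \<le> max C 1" by simp
      fix k
      show "house K ((M * b) $$ (p,q) $ k) \<le> max C 1 * (real k + 1) ^ 0"
      proof (cases "k = 0")
        case True thus ?thesis using Mp[OF pq] hdelta[of p q] by simp
      next
        case False
        hence "house K ((M * b) $$ (p,q) $ k) \<le> C" using Mp[OF pq] by simp
        thus ?thesis by simp
      qed
    qed
    have "\<exists>b'\<in>GL n (\<Inter>j\<in>I - {i}. Quot (DJ K a i1 (I - {j}))). \<exists>bi\<in>GL n (Quot (DJ K a i1 (I - {i}))).
        map_mat fps_to_fls b = b' * bi"
    proof (rule assemble[OF b(1) M _ _ sr_fps_over[OF srX] sr_pb[OF K srY YK]])
      show "M $$ (p,q) $ 0 = (if p = q then 1 else 0)" if "p < n" "q < n" for p q using Mp[OF that] by blast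
      show "(M * b) $$ (p,q) $ 0 = (if p = q then 1 else 0)" if "p < n" "q < n" for p q using Mp[OF that] by blast
      show "M $$ (p,q) \<in> fps_over X" if "p < n" "q < n" for p q using Mp[OF that] by blast
      show "(M * b) $$ (p,q) \<in> {f. pb K Y f}" if "p < n" "q < n" for p q using NP[OF that] .
      have "{f. pb K Y f} \<subseteq> conv_fps_over K Y" using pb_conv[OF K srY YK] by blast
      thus "{f. pb K Y f} \<subseteq> DJ K a i1 (I - {i})" unfolding DJ_def Y_def using True by simp
      fix j assume j: "j \<in> I - {i}"
      have XJ: "X \<subseteq> RJ K a (I - {j})" unfolding X_def using I(2) j True by (intro RJ_mono[where K=K and I=I and a=a, OF ctx]) auto
      have "fps_over X \<subseteq> fps_over (RJ K a (I - {j}))" by (rule fps_over_mono[OF XJ])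
      moreover have "i1 \<in> I - {j}" using j True I(2) by auto
      ultimately show "fps_over X \<subseteq> DJ K a i1 (I - {j})" unfolding DJ_def by simp
    qed
    thus ?thesis unfolding Qi'_def Qi_def by simp
  qed
qed

end
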